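(* Let $M$ be a smooth manifold of even dimension $n$, $G$ a Lorentzian metric on $M$, $B$ a 2-form on $M$ whose component matrix $(B_{ij})$ is everywhere invertible, and $\phi$ a smooth function. Let $H=dB$, $H_{abc}=\partial_aB_{bc}+\partial_bB_{ca}+\partial_cB_{ab}$, indices of $H$ raised with $G^{ab}$, and $R$ the scalar curvature of $G$. Define $\beta^{ij}$ as the inverse matrix of $B$ ($B_{ij}\beta^{jk}=\delta_i^k$), $\hat g^{ij}=\beta^{im}\beta^{jn}G_{mn}$ with inverse $\hat g_{ij}$, $D^a=\beta^{ab}\partial_b$, $\Theta^{abc}=\beta^{am}\partial_m\beta^{bc}+\beta^{bm}\partial_m\beta^{ca}+\beta^{cm}\partial_m\beta^{ab}$ with indices lowered by $\hat g_{ab}$, and $\hat R$ the scalar built from $(\hat g,\beta)$ as in the context. Then, pointwise on $M$, $$\sqrt{-\det(G_{ab})}\,e^{-2\phi}\Bigl(R-\tfrac1{12}H_{abc}H^{abc}+4G^{ab}\partial_a\phi\,\partial_b\phi\Bigr)=\sqrt{-\det(\hat g^{ab})}\,\det(\beta^{-1})\,e^{-2\phi}\Bigl(\hat R-\tfrac1{12}\Theta^{abc}\Theta_{abc}+4\hat g_{ab}D^a\phi\,D^b\phi\Bigr),$$ where $\det(\beta^{-1})=\det(B_{ab})$. In particular the bosonic action $S=\frac1{2\kappa^2}\int d^nx\sqrt{-|G|}e^{-2\phi}(R-\frac1{12}H^2+4(\partial\phi)^2)$ and the action $\hat S=\frac1{2\kappa^2}\int d^nx\sqrt{-|\hat g|}\,|\beta^{-1}|\,e^{-2\phi}(\hat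 R-\frac1{12}\Theta^2+4\hat g_{ab}D^a\phi D^b\phi)$ coincide under this field redefinition.
   Context: With $\beta_{ab}$ the inverse of $\beta^{ab}$ (i.e. $\beta_{ab}=B_{ab}$): $\mathcal Q_c{}^{ab}=\partial_c\beta^{ab}+\Theta^{abn}\beta_{nc}$; $\hat\Gamma_c{}^{ab}=\tfrac12\hat g_{cm}(D^a\hat g^{bm}+D^b\hat g^{am}-D^m\hat g^{ab})-\tfrac12\hat g_{cm}(\hat g^{an}\mathcal Q_n{}^{bm}+\hat g^{bn}\mathcal Q_n{}^{am})+\tfrac12\mathcal Q_c{}^{ab}$; $\hat R_a{}^{bcd}=D^c\hat\Gamma_a{}^{db}-D^d\hat\Gamma_a{}^{cb}+\hat\Gamma_a{}^{cm}\hat\Gamma_m{}^{db}-\hat\Gamma_a{}^{dm}\hat\Gamma_m{}^{cb}-\hat\Gamma_a{}^{mb}\mathcal Q_m{}^{cd}$; $\hat R^{ab}=\hat R_m{}^{amb}$; $\hat R=\hat g_{ab}\hat R^{ab}$. *)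

theory Defs
  imports "HOL-Analysis.Analysis"
begin

text \<open>Local-coordinate setting: fields are functions on an open coordinate domain
  U of real^'n; matrix-valued fields have type real^'n^'n (entry A $ i $ j).\<close>

type_synonym 'n field = "real^'n \<Rightarrow> real"
type_synonym 'n mfield = "real^'n \<Rightarrow> real^'n^'n"

definition pd :: "'n::finite \<Rightarrow> 'n field \<Rightarrow> real^'n \<Rightarrow> real" where
  "pd i f x = frechet_derivative f (at x) (axis i 1)"

definition pdk :: "'n::finite list \<Rightarrow> 'n field \<Rightarrow> 'n field" where
  "pdk is f = foldr pd is f"

definition smooth_on :: "(real^'n::finite) set \<Rightarrow> 'n field \<Rightarrow> bool" where
  "smooth_on U f \<longleftrightarrow> (\<forall>is. pdk is f differentiable_on U)"

definition lorentzian :: "real^'n::finite^'n \<Rightarrow> bool" where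
  "lorentzian A \<longleftrightarrow> transpose A = A \<and>
     (\<exists>(P::real^'n^'n) i0. invertible P \<and>
        transpose P ** A ** P = (\<chi> i j. if i = j then (if i = i0 then -1 else 1) else 0))"

definition Ginv :: "'n::finite mfield \<Rightarrow> 'n mfield" where
  "Ginv G x = matrix_inv (G x)"

definition christoffel :: "'n::finite mfield \<Rightarrow> 'n \<Rightarrow> 'n \<Rightarrow> 'n \<Rightarrow> 'n field" where
  "christoffel G a b c x = (1/2) * (\<Sum>d\<in>UNIV. Ginv G x $ a $ d *
      (pd b (\<lambda>y. G y $ d $ c) x + pd c (\<lambda>y. G y $ d $ b) x - pd d (\<lambda>y. G y $ b $ c) x))"

definition riemann :: "'n::finite mfield \<Rightarrow> 'n \<Rightarrow> 'n \<Rightarrow> 'n \<Rightarrow> 'n \<Rightarrow> 'n field" where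
  "riemann G a b c d x = pd c (christoffel G a d b) x - pd d (christoffel G a c b) x
     + (\<Sum>e\<in>UNIV. christoffel G a c e x * christoffel G e d b x
                 - christoffel G a d e x * christoffel G e c b x)"

definition ricci :: "'n::finite mfield \<Rightarrow> 'n \<Rightarrow> 'n \<Rightarrow> 'n field" where
  "ricci G b d x = (\<Sum>a\<in>UNIV. riemann G a b a d x)"

definition scalar_curv :: "'n::finite mfield \<Rightarrow> 'n field" where
  "scalar_curv G x = (\<Sum>b\<in>UNIV. \<Sum>d\<in>UNIV. Ginv G x $ b $ d * ricci G b d x)"

definition Hlow :: "'n::finite mfield \<Rightarrow> 'n \<Rightarrow> 'n \<Rightarrow> 'n \<Rightarrow> 'n field" where
  "Hlow B a b c x = pd a (\<lambda>y. B y $ b $ c) x + pd b (\<lambda>y. B y $ c $ a) x + pd c (\<lambda>y. B y $ a $ b) x"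

definition Hup :: "'n::finite mfield \<Rightarrow> 'n mfield \<Rightarrow> 'n \<Rightarrow> 'n \<Rightarrow> 'n \<Rightarrow> 'n field" where
  "Hup G B a b c x = (\<Sum>a'\<in>UNIV. \<Sum>b'\<in>UNIV. \<Sum>c'\<in>UNIV.
     Ginv G x $ a $ a' * Ginv G x $ b $ b' * Ginv G x $ c $ c' * Hlow B a' b' c' x)"

definition Hsq :: "'n::finite mfield \<Rightarrow> 'n mfield \<Rightarrow> 'n field" where
  "Hsq G B x = (\<Sum>a\<in>UNIV. \<Sum>b\<in>UNIV. \<Sum>c\<in>UNIV. Hlow B a b c x * Hup G B a b c x)"

definition beta :: "'n::finite mfield \<Rightarrow> 'n mfield" where
  "beta B x = matrix_inv (B x)"

definition ghat_up :: "'n::finite mfield \<Rightarrow> 'n mfield \<Rightarrow> 'n mfield" where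
  "ghat_up G B x = (\<chi> i j. \<Sum>m\<in>UNIV. \<Sum>n\<in>UNIV. beta B x $ i $ m * beta B x $ j $ n * G x $ m $ n)"

definition ghat_low :: "'n::finite mfield \<Rightarrow> 'n mfield \<Rightarrow> 'n mfield" where
  "ghat_low G B x = matrix_inv (ghat_up G B x)"

definition Dop :: "'n::finite mfield \<Rightarrow> 'n \<Rightarrow> 'n field \<Rightarrow> 'n field" where
  "Dop B a f x = (\<Sum>b\<in>UNIV. beta B x $ a $ b * pd b f x)"

definition Theta_up :: "'n::finite mfield \<Rightarrow> 'n \<Rightarrow> 'n \<Rightarrow> 'n \<Rightarrow> 'n field" where
  "Theta_up B a b c x = (\<Sum>m\<in>UNIV.
      beta B x $ a $ m * pd m (\<lambda>y. beta B y $ b $ c) x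
    + beta B x $ b $ m * pd m (\<lambda>y. beta B y $ c $ a) x
    + beta B x $ c $ m * pd m (\<lambda>y. beta B y $ a $ b) x)"

definition Theta_low :: "'n::finite mfield \<Rightarrow> 'n mfield \<Rightarrow> 'n \<Rightarrow> 'n \<Rightarrow> 'n \<Rightarrow> 'n field" where
  "Theta_low G B a b c x = (\<Sum>a'\<in>UNIV. \<Sum>b'\<in>UNIV. \<Sum>c'\<in>UNIV.
     ghat_low G B x $ a $ a' * ghat_low G B x $ b $ b' * ghat_low G B x $ c $ c' * Theta_up B a' b' c' x)"

definition Theta_sq :: "'n::finite mfield \<Rightarrow> 'n mfield \<Rightarrow> 'n field" where
  "Theta_sq G B x = (\<Sum>a\<in>UNIV. \<Sum>b\<in>UNIV. \<Sum>c\<in>UNIV. Theta_up B a b c x * Theta_low G B a b c x)"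

text \<open>Q_c^{ab} = d_c beta^{ab} + Theta^{abn} beta_{nc}, with beta_{nc} = B_{nc}\<close>
definition Qf :: "'n::finite mfield \<Rightarrow> 'n \<Rightarrow> 'n \<Rightarrow> 'n \<Rightarrow> 'n field" where
  "Qf B c a b x = pd c (\<lambda>y. beta B y $ a $ b) x + (\<Sum>n\<in>UNIV. Theta_up B a b n x * B x $ n $ c)"

definition Gamma_hat :: "'n::finite mfield \<Rightarrow> 'n mfield \<Rightarrow> 'n \<Rightarrow> 'n \<Rightarrow> 'n \<Rightarrow> 'n field" where
  "Gamma_hat G B c a b x =
     (1/2) * (\<Sum>m\<in>UNIV. ghat_low G B x $ c $ m *
        (Dop B a (\<lambda>y. ghat_up G B y $ b $ m) x + Dop B b (\<lambda>y. ghat_up G B y $ a $ m) x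
         - Dop B m (\<lambda>y. ghat_up G B y $ a $ b) x))
   - (1/2) * (\<Sum>m\<in>UNIV. \<Sum>n\<in>UNIV. ghat_low G B x $ c $ m *
        (ghat_up G B x $ a $ n * Qf B n b m x + ghat_up G B x $ b $ n * Qf B n a m x))
   + (1/2) * Qf B c a b x"

definition R_hat4 :: "'n::finite mfield \<Rightarrow> 'n mfield \<Rightarrow> 'n \<Rightarrow> 'n \<Rightarrow> 'n \<Rightarrow> 'n \<Rightarrow> 'n field" where
  "R_hat4 G B a b c d x =
     Dop B c (Gamma_hat G B a d b) x - Dop B d (Gamma_hat G B a c b) x
   + (\<Sum>m\<in>UNIV. Gamma_hat G B a c m x * Gamma_hat G B m d b x
               - Gamma_hat G B a d m x * Gamma_hat G B m c b x
               - Gamma_hat G B a m b x * Qf B m c d x)"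

definition R_hat2 :: "'n::finite mfield \<Rightarrow> 'n mfield \<Rightarrow> 'n \<Rightarrow> 'n \<Rightarrow> 'n field" where
  "R_hat2 G B a b x = (\<Sum>m\<in>UNIV. R_hat4 G B m a m b x)"

definition R_hat :: "'n::finite mfield \<Rightarrow> 'n mfield \<Rightarrow> 'n field" where
  "R_hat G B x = (\<Sum>a\<in>UNIV. \<Sum>b\<in>UNIV. ghat_low G B x $ a $ b * R_hat2 G B a b x)"

end

theory Submission
  imports Defs
begin


lemma has_derivative_local:
  assumes "open U" "x \<in> U" "\<And>y. y \<in> U \<Longrightarrow> f y = g y"
  shows "(f has_derivative D) (at x) \<longleftrightarrow> (g has_derivative D) (at x)"
proof
  assume "(f has_derivative D) (at x)"
  then show "(g has_derivative D) (at x)"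
    by (rule has_derivative_transform_within_open[OF _ assms(1,2)]) (use assms(3) in auto)
next
  assume "(g has_derivative D) (at x)"
  then show "(f has_derivative D) (at x)"
    by (rule has_derivative_transform_within_open[OF _ assms(1,2)]) (use assms(3) in auto)
qed

lemma pd_local:
  assumes "open U" "x \<in> U" "\<And>y. y \<in> U \<Longrightarrow> f y = g y"
  shows "pd i f x = pd i g x"
proof -
  have "frechet_derivative f (at x) = frechet_derivative g (at x)"
    unfolding frechet_derivative_def using has_derivative_local[OF assms] by simp
  then show ?thesis by (simp add: pd_def)
qed

lemma diff_local:
  assumes "open U" "x \<in> U" "\<And>y. y \<in> U \<Longrightarrow> f y = g y" "g differentiable at x"
  shows "f differentiable at x"
proof -
  obtain D where "(g has_derivative D) (at x)" using assms(4) unfolding differentiable_def by blast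
  then have "(f has_derivative D) (at x)" using has_derivative_local[OF assms(1-3), where D=D] by simp
  then show ?thesis unfolding differentiable_def by blast
qed

lemma fd_at: "(f has_derivative D) (at x) \<Longrightarrow> frechet_derivative f (at x) = D"
  by (rule frechet_derivative_at[symmetric])

lemma fdw: "f differentiable at x \<Longrightarrow> (f has_derivative frechet_derivative f (at x)) (at x)"
  by (simp add: frechet_derivative_works)

lemma pd_add: "f differentiable at x \<Longrightarrow> g differentiable at x \<Longrightarrow>
   pd i (\<lambda>y. f y + g y) x = pd i f x + pd i g x"
  unfolding pd_def by (subst fd_at[OF has_derivative_add[OF fdw fdw]]) auto

lemma pd_diff: "f differentiable at x \<Longrightarrow> g differentiable at x \<Longrightarrow>
   pd i (\<lambda>y. f y - g y) x = pd i f x - pd i g x"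
  unfolding pd_def by (subst fd_at[OF has_derivative_diff[OF fdw fdw]]) auto

lemma pd_minus: "f differentiable at x \<Longrightarrow> pd i (\<lambda>y. - f y) x = - pd i f x"
  unfolding pd_def by (subst fd_at[OF has_derivative_minus[OF fdw]]) auto

lemma pd_mult: "f differentiable at x \<Longrightarrow> g differentiable at x \<Longrightarrow>
   pd i (\<lambda>y. f y * g y) x = f x * pd i g x + pd i f x * g x"
  for f g :: "real^'n::finite \<Rightarrow> real"
  unfolding pd_def by (subst fd_at[OF has_derivative_mult[OF fdw fdw]]) auto

lemma pd_const[simp]: "pd i (\<lambda>y. c) x = 0"
  unfolding pd_def by simp

lemma pd_cmult: "f differentiable at x \<Longrightarrow> pd i (\<lambda>y. c * f y) x = c * pd i f x"
  for f :: "real^'n::finite \<Rightarrow> real"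
  using pd_mult[of "\<lambda>y. c" x f i] by simp

lemma pd_sum: "finite A \<Longrightarrow> (\<And>a. a \<in> A \<Longrightarrow> f a differentiable at x) \<Longrightarrow>
   pd i (\<lambda>y. \<Sum>a\<in>A. f a y) x = (\<Sum>a\<in>A. pd i (f a) x)"
proof (induction A rule: finite_induct)
  case empty then show ?case by simp
next
  case (insert a A)
  have "pd i (\<lambda>y. \<Sum>a\<in>insert a A. f a y) x = pd i (\<lambda>y. f a y + (\<Sum>a\<in>A. f a y)) x"
    using insert.hyps by simp
  also have "\<dots> = pd i (f a) x + pd i (\<lambda>y. \<Sum>a\<in>A. f a y) x"
  proof (rule pd_add)
    show "f a differentiable at x" using insert.prems by simp
    show "(\<lambda>y. \<Sum>a\<in>A. f a y) differentiable at x"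
      by (rule differentiable_sum) (use insert in auto)
  qed
  also have "\<dots> = (\<Sum>a\<in>insert a A. pd i (f a) x)"
    using insert by simp
  finally show ?case .
qed

lemma differentiable_prod':
  fixes f :: "'b \<Rightarrow> real^'n::finite \<Rightarrow> real"
  shows "finite A \<Longrightarrow> (\<And>a. a \<in> A \<Longrightarrow> f a differentiable at x) \<Longrightarrow>
   (\<lambda>y. \<Prod>a\<in>A. f a y) differentiable at x"
proof (induction A rule: finite_induct)
  case empty then show ?case by simp
next
  case (insert a A)
  then show ?case by (simp add: differentiable_mult)
qed

lemma det_differentiable:
  fixes M :: "real^'n::finite \<Rightarrow> real^'n^'n"
  assumes "\<And>i j. (\<lambda>y. M y $ i $ j) differentiable at x"
  shows "(\<lambda>y. det (M y)) differentiable at x"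
  unfolding det_def
  by (intro differentiable_sum ballI differentiable_mult differentiable_const differentiable_prod')
     (auto intro: assms)

lemma det_continuous:
  fixes M :: "real \<Rightarrow> real^'n::finite^'n"
  assumes "\<And>i j. continuous_on S (\<lambda>y. M y $ i $ j)"
  shows "continuous_on S (\<lambda>y. det (M y))"
  unfolding det_def
  by (intro continuous_on_sum continuous_on_mult continuous_on_const continuous_on_prod) (auto intro: assms)

lemma inv_right:
  fixes A :: "real^'n::finite^'n"
  assumes "invertible A"
  shows "(\<Sum>k\<in>UNIV. A$i$k * matrix_inv A $k$j) = (if i = j then 1 else 0)"
proof -
  have "A ** matrix_inv A = mat 1"
    using assms unfolding invertible_def matrix_inv_def by (rule someI2_ex) auto
  then have "(A ** matrix_inv A) $ i $ j = mat 1 $ i $ j" by simp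
  then show ?thesis by (simp add: matrix_matrix_mult_def mat_def)
qed

lemma inv_left:
  fixes A :: "real^'n::finite^'n"
  assumes "invertible A"
  shows "(\<Sum>k\<in>UNIV. matrix_inv A$i$k * A $k$j) = (if i = j then 1 else 0)"
proof -
  have "matrix_inv A ** A = mat 1"
    using assms unfolding invertible_def matrix_inv_def by (rule someI2_ex) auto
  then have "(matrix_inv A ** A) $ i $ j = mat 1 $ i $ j" by simp
  then show ?thesis by (simp add: matrix_matrix_mult_def mat_def)
qed

lemma inv_mats:
  fixes A :: "real^'n::finite^'n"
  assumes "invertible A"
  shows "A ** matrix_inv A = mat 1" "matrix_inv A ** A = mat 1"
  using assms unfolding invertible_def matrix_inv_def by (rule someI2_ex; auto)+

lemma inv_cramer:
  fixes A :: "real^'n::finite^'n"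
  assumes "invertible A"
  shows "matrix_inv A $ i $ j = det (\<chi> r s. if s = i then (if r = j then 1 else 0) else A$r$s) / det A"
proof -
  have d: "det A \<noteq> 0" using assms invertible_det_nz by blast
  have "A *v (matrix_inv A *v axis j 1) = axis j 1"
    by (simp add: matrix_vector_mul_assoc inv_mats[OF assms])
  then have "matrix_inv A *v axis j 1 = (\<chi> k. det(\<chi> r s. if s=k then axis j 1$r else A$r$s) / det A)"
    using cramer[OF d] by blast
  then have "(matrix_inv A *v axis j 1) $ i = det(\<chi> r s. if s=i then axis j 1$r else A$r$s) / det A"
    by simp
  moreover have "(matrix_inv A *v axis j 1) $ i = matrix_inv A $ i $ j"
    by (simp add: matrix_vector_mult_def axis_def if_distrib cong: if_cong)
  moreover have "(\<chi> r s. if s=i then axis j 1$r else A$r$s) = (\<chi> r s. if s = i then (if r = j then 1 else 0) else A$r$s)"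
    by (auto simp: axis_def vec_eq_iff)
  ultimately show ?thesis by simp
qed


lemma sum_delta_l[simp]: fixes i :: "'n::finite" shows "(\<Sum>p\<in>UNIV. (if i = p then 1 else 0) * (X p::real)) = X i"
proof -
  have "(\<Sum>p\<in>UNIV. (if i = p then 1 else 0) * X p) = (\<Sum>p\<in>UNIV. if i = p then X p else 0)"
    by (rule sum.cong) auto
  also have "\<dots> = X i" by simp
  finally show ?thesis .
qed
lemma sum_delta_r[simp]: fixes i :: "'n::finite" shows "(\<Sum>p\<in>UNIV. (X p::real) * (if p = i then 1 else 0)) = X i"
proof -
  have "(\<Sum>p\<in>UNIV. X p * (if p = i then 1 else 0)) = (\<Sum>p\<in>UNIV. if p = i then X p else 0)"
    by (rule sum.cong) auto
  also have "\<dots> = X i" by simp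
  finally show ?thesis .
qed
lemma sum_delta_l2[simp]: fixes i :: "'n::finite" shows "(\<Sum>p\<in>UNIV. (if p = i then 1 else 0) * (X p::real)) = X i"
  using sum_delta_l[of i X] by (simp add: eq_commute)
lemma sum_delta_r2[simp]: fixes i :: "'n::finite" shows "(\<Sum>p\<in>UNIV. (X p::real) * (if i = p then 1 else 0)) = X i"
  using sum_delta_r[of X i] by (simp add: eq_commute)

lemma diff_if: "f differentiable at x \<Longrightarrow> (\<lambda>y. if c then a else f y) differentiable at x"
  by (cases c) auto

lemma contract_inv_left:
  fixes A :: "real^'n::finite^'n"
  assumes "invertible A"
  shows "(\<Sum>a\<in>UNIV. matrix_inv A $i$a * (\<Sum>p\<in>UNIV. A$a$p * X p)) = X i"
proof -
  have "(\<Sum>a\<in>UNIV. matrix_inv A $i$a * (\<Sum>p\<in>UNIV. A$a$p * X p))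
      = (\<Sum>p\<in>UNIV. (\<Sum>a\<in>UNIV. matrix_inv A $i$a * A$a$p) * X p)"
  proof -
    have "(\<Sum>a\<in>UNIV. matrix_inv A $i$a * (\<Sum>p\<in>UNIV. A$a$p * X p))
       = (\<Sum>a\<in>UNIV. \<Sum>p\<in>UNIV. matrix_inv A $i$a * A$a$p * X p)"
      by (simp add: sum_distrib_left mult.assoc)
    also have "\<dots> = (\<Sum>p\<in>UNIV. \<Sum>a\<in>UNIV. matrix_inv A $i$a * A$a$p * X p)"
      by (rule sum.swap)
    also have "\<dots> = (\<Sum>p\<in>UNIV. (\<Sum>a\<in>UNIV. matrix_inv A $i$a * A$a$p) * X p)"
      by (simp add: sum_distrib_right)
    finally show ?thesis .
  qed
  also have "\<dots> = X i" by (simp add: inv_left[OF assms])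
  finally show ?thesis .
qed

lemma inv_diff:
  fixes M :: "real^'n::finite \<Rightarrow> real^'n^'n"
  assumes "open U" "x \<in> U" "\<And>y. y \<in> U \<Longrightarrow> invertible (M y)"
    "\<And>i j. (\<lambda>y. M y $ i $ j) differentiable at x"
  shows "(\<lambda>y. matrix_inv (M y) $ i $ j) differentiable at x"
proof (rule diff_local[OF assms(1,2)])
  show "matrix_inv (M y) $ i $ j = det (\<chi> r s. if s = i then (if r = j then 1 else 0) else M y$r$s) / det (M y)"
    if "y \<in> U" for y using inv_cramer[OF assms(3)[OF that]] .
  have d: "det (M x) \<noteq> 0" using assms(2,3) invertible_det_nz by blast
  show "(\<lambda>y. det (\<chi> r s. if s = i then (if r = j then 1 else 0) else M y$r$s) / det (M y)) differentiable at x"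
    by (intro differentiable_divide det_differentiable d) (auto intro!: diff_if assms(4))
qed

lemma inv_pd:
  fixes M :: "real^'n::finite \<Rightarrow> real^'n^'n"
  assumes "open U" "x \<in> U" "\<And>y. y \<in> U \<Longrightarrow> invertible (M y)"
    "\<And>i j. (\<lambda>y. M y $ i $ j) differentiable at x"
  shows "pd k (\<lambda>y. matrix_inv (M y) $ i $ j) x =
     - (\<Sum>p\<in>UNIV. \<Sum>q\<in>UNIV. matrix_inv (M x) $ i $ p * pd k (\<lambda>y. M y $ p $ q) x * matrix_inv (M x) $ q $ j)"
proof -
  let ?I = "\<lambda>y. matrix_inv (M y)"
  have di: "\<And>i j. (\<lambda>y. ?I y $ i $ j) differentiable at x" using inv_diff[OF assms] .
  have eq: "(\<Sum>p\<in>UNIV. M x $a$p * pd k (\<lambda>y. ?I y $p$j) x + pd k (\<lambda>y. M y $a$p) x * ?I x $p$j) = 0" for a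
  proof -
    have "pd k (\<lambda>y. \<Sum>p\<in>UNIV. M y $a$p * ?I y $p$j) x = pd k (\<lambda>y. if a = j then 1 else 0) x"
      by (rule pd_local[OF assms(1,2)]) (simp add: inv_right[OF assms(3)])
    also have "\<dots> = 0" by simp
    finally have "pd k (\<lambda>y. \<Sum>p\<in>UNIV. M y $a$p * ?I y $p$j) x = 0" .
    moreover have "pd k (\<lambda>y. \<Sum>p\<in>UNIV. M y $a$p * ?I y $p$j) x =
       (\<Sum>p\<in>UNIV. M x $a$p * pd k (\<lambda>y. ?I y $p$j) x + pd k (\<lambda>y. M y $a$p) x * ?I x $p$j)"
      by (subst pd_sum) (auto intro!: sum.cong pd_mult assms(4) di differentiable_mult)
    ultimately show ?thesis by simp
  qed
  have "0 = (\<Sum>a\<in>UNIV. ?I x $i$a * (\<Sum>p\<in>UNIV. M x $a$p * pd k (\<lambda>y. ?I y $p$j) x + pd k (\<lambda>y. M y $a$p) x * ?I x $p$j))"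
    by (simp add: eq)
  also have "\<dots> = (\<Sum>a\<in>UNIV. ?I x $i$a * (\<Sum>p\<in>UNIV. M x $a$p * pd k (\<lambda>y. ?I y $p$j) x))
      + (\<Sum>a\<in>UNIV. \<Sum>p\<in>UNIV. ?I x $i$a * pd k (\<lambda>y. M y $a$p) x * ?I x $p$j)"
    by (simp add: sum.distrib distrib_left sum_distrib_left mult.assoc)
  also have "\<dots> = pd k (\<lambda>y. ?I y $i$j) x + (\<Sum>a\<in>UNIV. \<Sum>p\<in>UNIV. ?I x $i$a * pd k (\<lambda>y. M y $a$p) x * ?I x $p$j)"
    by (simp add: contract_inv_left[OF assms(3)[OF assms(2)]])
  finally show ?thesis by linarith
qed


lemma line_deriv:
  fixes f :: "real^'n::finite \<Rightarrow> real"
  assumes "f differentiable at (a + t *\<^sub>R v)"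
  shows "((\<lambda>s. f (a + s *\<^sub>R v)) has_real_derivative frechet_derivative f (at (a + t *\<^sub>R v)) v) (at t)"
proof -
  let ?D = "frechet_derivative f (at (a + t *\<^sub>R v))"
  have 1: "((\<lambda>s. a + s *\<^sub>R v) has_derivative (\<lambda>s. s *\<^sub>R v)) (at t)"
    by (auto intro!: derivative_eq_intros)
  have 2: "(f has_derivative ?D) (at (a + t *\<^sub>R v))" using assms by (rule fdw)
  have lin: "linear ?D" using 2 has_derivative_linear by blast
  have "((\<lambda>s. f (a + s *\<^sub>R v)) has_derivative (\<lambda>s. ?D (s *\<^sub>R v))) (at t)"
    using diff_chain_at[OF 1 2] by (simp add: o_def)
  then show ?thesis
    by (rule has_derivative_imp_has_field_derivative) (simp add: linear_cmul[OF lin])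
qed

lemma pd_eq_fd: "pd k f y = frechet_derivative f (at y) (axis k 1)"
  by (simp add: pd_def)

lemma schwarz_est:
  fixes f :: "real^'n::finite \<Rightarrow> real"
  assumes U: "open U" "x \<in> U" and fd: "\<And>y. y \<in> U \<Longrightarrow> f differentiable at y"
    and gd: "pd k f differentiable at x" and e: "e > 0"
  shows "\<exists>d>0. \<forall>h. 0 < h \<and> h < d \<longrightarrow>
     \<bar>(f (x + h *\<^sub>R axis k 1 + h *\<^sub>R axis l 1) - f (x + h *\<^sub>R axis k 1) - f (x + h *\<^sub>R axis l 1) + f x)
        - h^2 * pd l (pd k f) x\<bar> \<le> 3 * e * h^2"
proof -
  let ?ek = "axis k (1::real) :: real^'n" and ?el = "axis l (1::real) :: real^'n"
  let ?g = "pd k f"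
  obtain r where r: "r > 0" "ball x r \<subseteq> U" using U open_contains_ball by blast
  define Dg where "Dg = frechet_derivative ?g (at x)"
  have Dg: "(?g has_derivative Dg) (at x)" unfolding Dg_def using gd by (rule fdw)
  have lin: "linear Dg" using Dg has_derivative_linear by blast
  have Dgel: "Dg ?el = pd l ?g x" by (simp add: Dg_def pd_def)
  obtain d1 where d1: "d1 > 0" "\<And>z. norm (z - x) < d1 \<Longrightarrow> norm (?g z - ?g x - Dg (z - x)) \<le> e * norm (z - x)"
    using Dg e unfolding has_derivative_at_alt by blast
  define d where "d = min d1 r / 2"
  have "d > 0" using d1 r by (simp add: d_def)
  moreover have "\<bar>(f (x + h *\<^sub>R ?ek + h *\<^sub>R ?el) - f (x + h *\<^sub>R ?ek) - f (x + h *\<^sub>R ?el) + f x)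
        - h^2 * pd l ?g x\<bar> \<le> 3 * e * h^2" if h: "0 < h" "h < d" for h
  proof -
    have inU: "x + t *\<^sub>R ?ek + s *\<^sub>R ?el \<in> U" if "0 \<le> t" "t \<le> h" "0 \<le> s" "s \<le> h" for s t
    proof -
      have "norm (t *\<^sub>R ?ek + s *\<^sub>R ?el) \<le> norm (t *\<^sub>R ?ek) + norm (s *\<^sub>R ?el)" by (rule norm_triangle_ineq)
      also have "\<dots> = t + s" using that by simp
      also have "\<dots> < r" using that h by (simp add: d_def)
      moreover have "dist x (x + (t *\<^sub>R ?ek + s *\<^sub>R ?el)) = norm (t *\<^sub>R ?ek + s *\<^sub>R ?el)"
        by (metis add_diff_cancel_left' dist_commute dist_norm)
      ultimately have "x + (t *\<^sub>R ?ek + s *\<^sub>R ?el) \<in> ball x r" by simp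
      then have "x + t *\<^sub>R ?ek + s *\<^sub>R ?el \<in> ball x r" by (simp add: add.assoc)
      then show ?thesis using r by blast
    qed
    define \<phi> where "\<phi> t = f ((x + h *\<^sub>R ?el) + t *\<^sub>R ?ek) - f (x + t *\<^sub>R ?ek)" for t
    define \<phi>' where "\<phi>' t = ?g ((x + h *\<^sub>R ?el) + t *\<^sub>R ?ek) - ?g (x + t *\<^sub>R ?ek)" for t
    have "DERIV \<phi> t :> \<phi>' t" if "0 \<le> t" "t \<le> h" for t
    proof -
      have a: "f differentiable at ((x + h *\<^sub>R ?el) + t *\<^sub>R ?ek)"
        using fd inU[of t h] that h by (simp add: algebra_simps)
      have b: "f differentiable at (x + t *\<^sub>R ?ek)"
        using fd inU[of t 0] that h by simp
      show ?thesis unfolding \<phi>_def \<phi>'_def pd_eq_fd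
        by (intro DERIV_diff line_deriv a b)
    qed
    then obtain \<theta> where th: "0 < \<theta>" "\<theta> < h" "\<phi> h - \<phi> 0 = (h - 0) * \<phi>' \<theta>"
      using MVT2[of 0 h \<phi> \<phi>'] h by auto
    have \<Delta>: "\<phi> h - \<phi> 0 = f (x + h *\<^sub>R ?ek + h *\<^sub>R ?el) - f (x + h *\<^sub>R ?ek) - f (x + h *\<^sub>R ?el) + f x"
      unfolding \<phi>_def by (simp add: algebra_simps)
    define z1 where "z1 = (x + h *\<^sub>R ?el) + \<theta> *\<^sub>R ?ek"
    define z2 where "z2 = x + \<theta> *\<^sub>R ?ek"
    have n1: "norm (z1 - x) \<le> 2 * h"
    proof -
      have "norm (z1 - x) \<le> norm (h *\<^sub>R ?el) + norm (\<theta> *\<^sub>R ?ek)"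
        unfolding z1_def using norm_triangle_ineq[of "h *\<^sub>R ?el" "\<theta> *\<^sub>R ?ek"] by simp
      also have "\<dots> = h + \<theta>" using th h by simp
      finally show ?thesis using th by simp
    qed
    have n2: "norm (z2 - x) \<le> h" unfolding z2_def using th by simp
    have r1: "\<bar>?g z1 - ?g x - Dg (z1 - x)\<bar> \<le> e * (2 * h)"
    proof -
      have "norm (z1 - x) < d1" using n1 h by (simp add: d_def)
      then have "\<bar>?g z1 - ?g x - Dg (z1 - x)\<bar> \<le> e * norm (z1 - x)" using d1(2) by simp
      also have "\<dots> \<le> e * (2 * h)" using n1 e by (simp add: mult_left_mono)
      finally show ?thesis .
    qed
    have r2: "\<bar>?g z2 - ?g x - Dg (z2 - x)\<bar> \<le> e * h"
    proof -
      have "norm (z2 - x) < d1" using n2 h by (simp add: d_def)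
      then have "\<bar>?g z2 - ?g x - Dg (z2 - x)\<bar> \<le> e * norm (z2 - x)" using d1(2) by simp
      also have "\<dots> \<le> e * h" using n2 e by (simp add: mult_left_mono)
      finally show ?thesis .
    qed
    have lindiff: "Dg (z1 - x) - Dg (z2 - x) = h * Dg ?el"
      unfolding z1_def z2_def by (simp add: linear_add[OF lin] linear_cmul[OF lin])
    have "\<bar>\<phi>' \<theta> - h * Dg ?el\<bar> \<le> 3 * e * h"
    proof -
      have "\<phi>' \<theta> - h * Dg ?el = (?g z1 - ?g x - Dg (z1 - x)) - (?g z2 - ?g x - Dg (z2 - x))"
        unfolding \<phi>'_def z1_def[symmetric] z2_def[symmetric] using lindiff by simp
      then show ?thesis using r1 r2 by linarith
    qed
    then have "h * \<bar>\<phi>' \<theta> - h * Dg ?el\<bar> \<le> h * (3 * e * h)" using h by (simp add: mult_left_mono)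
    moreover have "h * \<bar>\<phi>' \<theta> - h * Dg ?el\<bar> = \<bar>(\<phi> h - \<phi> 0) - h^2 * Dg ?el\<bar>"
    proof -
      have "(\<phi> h - \<phi> 0) - h^2 * Dg ?el = h * (\<phi>' \<theta> - h * Dg ?el)"
        using th(3) by (simp add: power2_eq_square algebra_simps)
      then show ?thesis using h by (simp add: abs_mult)
    qed
    ultimately show ?thesis unfolding \<Delta> Dgel by (simp add: power2_eq_square algebra_simps)
  qed
  ultimately show ?thesis by blast
qed

lemma schwarz:
  fixes f :: "real^'n::finite \<Rightarrow> real"
  assumes U: "open U" "x \<in> U" and fd: "\<And>y. y \<in> U \<Longrightarrow> f differentiable at y"
    and gd: "\<And>k. pd k f differentiable at x"
  shows "pd i (pd j f) x = pd j (pd i f) x"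
proof -
  let ?ei = "axis i (1::real) :: real^'n" and ?ej = "axis j (1::real) :: real^'n"
  have key: "\<bar>pd j (pd i f) x - pd i (pd j f) x\<bar> \<le> 6 * e" if e: "e > 0" for e
  proof -
    obtain d1 where d1: "d1 > 0" "\<And>h. 0 < h \<and> h < d1 \<Longrightarrow>
     \<bar>(f (x + h *\<^sub>R ?ei + h *\<^sub>R ?ej) - f (x + h *\<^sub>R ?ei) - f (x + h *\<^sub>R ?ej) + f x)
        - h^2 * pd j (pd i f) x\<bar> \<le> 3 * e * h^2"
      using schwarz_est[OF U fd gd e, of i j] by blast
    obtain d2 where d2: "d2 > 0" "\<And>h. 0 < h \<and> h < d2 \<Longrightarrow>
     \<bar>(f (x + h *\<^sub>R ?ej + h *\<^sub>R ?ei) - f (x + h *\<^sub>R ?ej) - f (x + h *\<^sub>R ?ei) + f x)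
        - h^2 * pd i (pd j f) x\<bar> \<le> 3 * e * h^2"
      using schwarz_est[OF U fd gd e, of j i] by blast
    define h where "h = min d1 d2 / 2"
    have h: "0 < h" "h < d1" "h < d2" using d1 d2 by (auto simp: h_def)
    have sw: "x + h *\<^sub>R ?ej + h *\<^sub>R ?ei = x + h *\<^sub>R ?ei + h *\<^sub>R ?ej" by (simp add: algebra_simps)
    let ?X = "f (x + h *\<^sub>R ?ei + h *\<^sub>R ?ej) - f (x + h *\<^sub>R ?ei) - f (x + h *\<^sub>R ?ej) + f x"
    have a: "\<bar>?X - h^2 * pd j (pd i f) x\<bar> \<le> 3 * e * h^2" using d1(2)[of h] h by simp
    have b: "\<bar>?X - h^2 * pd i (pd j f) x\<bar> \<le> 3 * e * h^2" using d2(2)[of h] h unfolding sw by (simp add: algebra_simps)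
    have eq: "h^2 * (pd j (pd i f) x - pd i (pd j f) x) = (?X - h^2 * pd i (pd j f) x) - (?X - h^2 * pd j (pd i f) x)"
      by (simp add: algebra_simps)
    have "\<bar>h^2 * (pd j (pd i f) x - pd i (pd j f) x)\<bar> \<le> 6 * e * h^2"
      unfolding eq using abs_triangle_ineq4[of "?X - h^2 * pd i (pd j f) x" "?X - h^2 * pd j (pd i f) x"] a b
      by linarith
    then have "h^2 * \<bar>pd j (pd i f) x - pd i (pd j f) x\<bar> \<le> h^2 * (6 * e)"
      by (simp add: abs_mult mult.commute mult.left_commute)
    then show ?thesis using h by (simp add: mult_le_cancel_left)
  qed
  then have "\<bar>pd j (pd i f) x - pd i (pd j f) x\<bar> \<le> 0 + e" if "e > 0" for e
    using key[of "e/6"] that by simp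
  then have "\<bar>pd j (pd i f) x - pd i (pd j f) x\<bar> \<le> 0"
    by (rule field_le_epsilon)
  then show ?thesis by simp
qed


lemma inv_unique_right:
  fixes A N :: "real^'n::finite^'n"
  assumes "invertible A" "A ** N = mat 1"
  shows "matrix_inv A = N"
proof -
  have "matrix_inv A = matrix_inv A ** (A ** N)" using assms(2) by simp
  also have "\<dots> = (matrix_inv A ** A) ** N" by (simp add: matrix_mul_assoc)
  also have "\<dots> = N" using inv_mats[OF assms(1)] by simp
  finally show ?thesis .
qed

locale ctx =
  fixes U :: "(real^'n::finite) set" and G B :: "real^'n \<Rightarrow> real^'n^'n"
  assumes U: "open U"
  and G_inv: "\<And>y. y \<in> U \<Longrightarrow> invertible (G y)"
  and G_sym: "\<And>y a b. y \<in> U \<Longrightarrow> G y $ a $ b = G y $ b $ a"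
  and G_d: "\<And>y a b. y \<in> U \<Longrightarrow> (\<lambda>z. G z $ a $ b) differentiable at y"
  and G_dd: "\<And>y a b k. y \<in> U \<Longrightarrow> pd k (\<lambda>z. G z $ a $ b) differentiable at y"
  and B_inv: "\<And>y. y \<in> U \<Longrightarrow> invertible (B y)"
  and B_anti: "\<And>y a b. y \<in> U \<Longrightarrow> B y $ a $ b = - B y $ b $ a"
  and B_d: "\<And>y a b. y \<in> U \<Longrightarrow> (\<lambda>z. B z $ a $ b) differentiable at y"
  and B_dd: "\<And>y a b k. y \<in> U \<Longrightarrow> pd k (\<lambda>z. B z $ a $ b) differentiable at y"
begin

lemma Bb: "y \<in> U \<Longrightarrow> (\<Sum>k\<in>UNIV. B y$i$k * beta B y$k$j) = (if i = j then 1 else 0)"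
  unfolding beta_def by (rule inv_right[OF B_inv])
lemma bB: "y \<in> U \<Longrightarrow> (\<Sum>k\<in>UNIV. beta B y$i$k * B y$k$j) = (if i = j then 1 else 0)"
  unfolding beta_def by (rule inv_left[OF B_inv])
lemma Gg: "y \<in> U \<Longrightarrow> (\<Sum>k\<in>UNIV. G y$i$k * Ginv G y$k$j) = (if i = j then 1 else 0)"
  unfolding Ginv_def by (rule inv_right[OF G_inv])
lemma gG: "y \<in> U \<Longrightarrow> (\<Sum>k\<in>UNIV. Ginv G y$i$k * G y$k$j) = (if i = j then 1 else 0)"
  unfolding Ginv_def by (rule inv_left[OF G_inv])

lemma b_anti: assumes y: "y \<in> U" shows "beta B y $ i $ j = - beta B y $ j $ i"
proof -
  let ?b = "beta B y"
  let ?N = "(\<chi> i j. - ?b $ j $ i) :: real^'n^'n"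
  have "B y ** ?N = mat 1"
  proof -
    have "(B y ** ?N) $ i $ j = mat 1 $ i $ j" for i j
    proof -
      have "(B y ** ?N) $ i $ j = (\<Sum>k\<in>UNIV. ?b $ j $ k * B y $ k $ i)"
        unfolding matrix_matrix_mult_def by (auto intro!: sum.cong simp: B_anti[OF y, of i])
      also have "\<dots> = mat 1 $ i $ j" by (simp add: bB[OF y] mat_def)
      finally show ?thesis .
    qed
    then show ?thesis by (simp add: vec_eq_iff)
  qed
  then have "?b = ?N" unfolding beta_def by (rule inv_unique_right[OF B_inv[OF y]])
  then show ?thesis by (metis vec_lambda_beta)
qed

lemma b_d: "y \<in> U \<Longrightarrow> (\<lambda>z. beta B z $ i $ j) differentiable at y"
  unfolding beta_def by (rule inv_diff[OF U _ B_inv B_d])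

lemma gi_d: "y \<in> U \<Longrightarrow> (\<lambda>z. Ginv G z $ i $ j) differentiable at y"
  unfolding Ginv_def by (rule inv_diff[OF U _ G_inv G_d])

lemma db: "y \<in> U \<Longrightarrow> pd k (\<lambda>z. beta B z $ i $ j) y =
  - (\<Sum>p\<in>UNIV. \<Sum>q\<in>UNIV. beta B y $ i $ p * pd k (\<lambda>z. B z $ p $ q) y * beta B y $ q $ j)"
  unfolding beta_def by (rule inv_pd[OF U _ B_inv B_d])

lemma db_d: assumes y: "y \<in> U" shows "pd k (\<lambda>z. beta B z $ i $ j) differentiable at y"
proof (rule diff_local[OF U y])
  show "pd k (\<lambda>z. beta B z $ i $ j) z =
    - (\<Sum>p\<in>UNIV. \<Sum>q\<in>UNIV. beta B z $ i $ p * pd k (\<lambda>z. B z $ p $ q) z * beta B z $ q $ j)"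
    if "z \<in> U" for z using db[OF that] .
  show "(\<lambda>z. - (\<Sum>p\<in>UNIV. \<Sum>q\<in>UNIV. beta B z $ i $ p * pd k (\<lambda>z. B z $ p $ q) z * beta B z $ q $ j))
     differentiable at y"
    by (intro differentiable_minus differentiable_sum ballI finite differentiable_mult b_d[OF y] B_dd[OF y])
qed

lemma ddb_sym: "y \<in> U \<Longrightarrow> pd l (pd k (\<lambda>z. beta B z $ i $ j)) y = pd k (pd l (\<lambda>z. beta B z $ i $ j)) y"
  by (rule schwarz[OF U _ b_d db_d])

lemma db_anti: assumes y: "y \<in> U"
  shows "pd k (\<lambda>z. beta B z $ i $ j) y = - pd k (\<lambda>z. beta B z $ j $ i) y"
proof -
  have "pd k (\<lambda>z. beta B z $ i $ j) y = pd k (\<lambda>z. - beta B z $ j $ i) y"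
    by (rule pd_local[OF U y]) (rule b_anti)
  also have "\<dots> = - pd k (\<lambda>z. beta B z $ j $ i) y" by (rule pd_minus[OF b_d[OF y]])
  finally show ?thesis .
qed

lemma dG_sym: assumes y: "y \<in> U"
  shows "pd k (\<lambda>z. G z $ a $ b) y = pd k (\<lambda>z. G z $ b $ a) y"
  by (rule pd_local[OF U y]) (rule G_sym)

lemma chris_sym: assumes y: "y \<in> U"
  shows "christoffel G m k l y = christoffel G m l k y"
proof -
  have "pd k (\<lambda>y. G y $ d $ l) y + pd l (\<lambda>y. G y $ d $ k) y - pd d (\<lambda>y. G y $ k $ l) y
      = pd l (\<lambda>y. G y $ d $ k) y + pd k (\<lambda>y. G y $ d $ l) y - pd d (\<lambda>y. G y $ l $ k) y" for d
    using dG_sym[OF y, of d k l] by simp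
  note eq = this
  show ?thesis unfolding christoffel_def by (simp only: eq)
qed

lemma chris_fun: "christoffel G a b c = (\<lambda>x. (1/2) * (\<Sum>d\<in>UNIV. Ginv G x $ a $ d *
      (pd b (\<lambda>y. G y $ d $ c) x + pd c (\<lambda>y. G y $ d $ b) x - pd d (\<lambda>y. G y $ b $ c) x)))"
  by (rule ext) (simp add: christoffel_def)

lemma chris_d: assumes y: "y \<in> U" shows "christoffel G a b c differentiable at y"
  unfolding chris_fun
  by (intro differentiable_mult differentiable_const differentiable_sum ballI finite
      differentiable_add differentiable_diff gi_d[OF y] G_dd[OF y])

end


lemma contract_sym:
  fixes gu gl :: "'n::finite \<Rightarrow> 'n \<Rightarrow> real"
  assumes inv: "\<And>c n. (\<Sum>m\<in>UNIV. gl c m * gu m n) = (if c = n then 1 else 0)"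
    and sym: "\<And>a b. gu a b = gu b a"
  shows "(\<Sum>m\<in>UNIV. gl c m * (\<Sum>k\<in>UNIV. F k * gu k m)) = F c"
proof -
  have "(\<Sum>m\<in>UNIV. gl c m * (\<Sum>k\<in>UNIV. F k * gu k m)) = (\<Sum>m\<in>UNIV. \<Sum>k\<in>UNIV. F k * (gl c m * gu m k))"
    by (simp add: sum_distrib_left sym mult.commute mult.left_commute)
  also have "\<dots> = (\<Sum>k\<in>UNIV. \<Sum>m\<in>UNIV. F k * (gl c m * gu m k))" by (rule sum.swap)
  also have "\<dots> = (\<Sum>k\<in>UNIV. F k * (if c = k then 1 else 0))" by (simp add: sum_distrib_left[symmetric] inv)
  also have "\<dots> = F c" by simp
  finally show ?thesis .
qed

lemma koszul:
  fixes gu gl :: "'n::finite \<Rightarrow> 'n \<Rightarrow> real" and Dg X Q :: "'n \<Rightarrow> 'n \<Rightarrow> 'n \<Rightarrow> real"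
  assumes inv: "\<And>c n. (\<Sum>m\<in>UNIV. gl c m * gu m n) = (if c = n then 1 else 0)"
    and sym: "\<And>a b. gu a b = gu b a"
    and met: "\<And>a b c. Dg a b c = (\<Sum>m\<in>UNIV. X m a b * gu m c + X m a c * gu b m)"
    and tor: "\<And>c a b. X c a b - X c b a = Q c a b"
  shows "(1/2) * (\<Sum>m\<in>UNIV. gl c m * (Dg a b m + Dg b a m - Dg m a b))
     - (1/2) * (\<Sum>m\<in>UNIV. \<Sum>n\<in>UNIV. gl c m * (gu a n * Q n b m + gu b n * Q n a m))
     + (1/2) * Q c a b = X c a b"
proof -
  have e1: "Dg a b m + Dg b a m - Dg m a b = (\<Sum>k\<in>UNIV. (2 * X k a b) * gu k m) - (\<Sum>k\<in>UNIV. Q k a b * gu k m)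
      + (\<Sum>k\<in>UNIV. gu a k * Q k b m + gu b k * Q k a m)" for m
  proof -
    have "Dg a b m + Dg b a m - Dg m a b = (\<Sum>k\<in>UNIV. (X k a b * gu k m + X k a m * gu b k)
       + (X k b a * gu k m + X k b m * gu a k) - (X k m a * gu k b + X k m b * gu a k))"
      unfolding met by (simp add: sum.distrib sum_subtractf)
    also have "\<dots> = (\<Sum>k\<in>UNIV. (2 * X k a b) * gu k m - Q k a b * gu k m + (gu a k * Q k b m + gu b k * Q k a m))"
    proof (rule sum.cong[OF refl])
      fix k
      have t1: "X k b a = X k a b - Q k a b" using tor[of k a b] by simp
      have t2: "X k m a = X k a m - Q k a m" using tor[of k a m] by simp
      have t3: "X k m b = X k b m - Q k b m" using tor[of k b m] by simp
      have s1: "gu k b = gu b k" by (rule sym)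
      show "(X k a b * gu k m + X k a m * gu b k) + (X k b a * gu k m + X k b m * gu a k)
          - (X k m a * gu k b + X k m b * gu a k) =
          (2 * X k a b) * gu k m - Q k a b * gu k m + (gu a k * Q k b m + gu b k * Q k a m)"
        unfolding t1 t2 t3 s1 by (simp add: algebra_simps)
    qed
    also have "\<dots> = (\<Sum>k\<in>UNIV. (2 * X k a b) * gu k m) - (\<Sum>k\<in>UNIV. Q k a b * gu k m)
      + (\<Sum>k\<in>UNIV. gu a k * Q k b m + gu b k * Q k a m)"
      by (simp add: sum.distrib sum_subtractf)
    finally show ?thesis .
  qed
  have "(\<Sum>m\<in>UNIV. gl c m * (Dg a b m + Dg b a m - Dg m a b)) =
     (\<Sum>m\<in>UNIV. gl c m * (\<Sum>k\<in>UNIV. (2 * X k a b) * gu k m)) - (\<Sum>m\<in>UNIV. gl c m * (\<Sum>k\<in>UNIV. Q k a b * gu k m))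
      + (\<Sum>m\<in>UNIV. \<Sum>n\<in>UNIV. gl c m * (gu a n * Q n b m + gu b n * Q n a m))"
    unfolding e1 by (simp add: distrib_left right_diff_distrib sum.distrib sum_subtractf sum_distrib_left)
  also have "\<dots> = 2 * X c a b - Q c a b + (\<Sum>m\<in>UNIV. \<Sum>n\<in>UNIV. gl c m * (gu a n * Q n b m + gu b n * Q n a m))"
    by (simp only: contract_sym[OF inv sym])
  finally show ?thesis by linarith
qed


lemma mat_entry: "(A ** C) $ i $ j = (\<Sum>k\<in>UNIV. A $ i $ k * C $ k $ j)"
  by (simp add: matrix_matrix_mult_def)

context ctx begin

lemma gu_entry: "ghat_up G B y $ i $ j = (\<Sum>m\<in>UNIV. \<Sum>n\<in>UNIV. beta B y $ i $ m * beta B y $ j $ n * G y $ m $ n)"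
  by (simp add: ghat_up_def)

lemma gu_mat: "ghat_up G B y = beta B y ** G y ** transpose (beta B y)"
proof -
  have "ghat_up G B y $ i $ j = (beta B y ** G y ** transpose (beta B y)) $ i $ j" for i j
  proof -
    have "(beta B y ** G y ** transpose (beta B y)) $ i $ j
       = (\<Sum>n\<in>UNIV. \<Sum>m\<in>UNIV. beta B y $ i $ m * G y $ m $ n * beta B y $ j $ n)"
      by (simp add: mat_entry transpose_def sum_distrib_right)
    also have "\<dots> = (\<Sum>m\<in>UNIV. \<Sum>n\<in>UNIV. beta B y $ i $ m * G y $ m $ n * beta B y $ j $ n)"
      by (rule sum.swap)
    also have "\<dots> = ghat_up G B y $ i $ j"
      by (simp add: gu_entry mult_ac)
    finally show ?thesis by simp
  qed
  then show ?thesis by (simp add: vec_eq_iff)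
qed

lemma gu_sym: "y \<in> U \<Longrightarrow> ghat_up G B y $ a $ b = ghat_up G B y $ b $ a"
proof -
  assume y: "y \<in> U"
  have "ghat_up G B y $ a $ b = (\<Sum>m\<in>UNIV. \<Sum>n\<in>UNIV. beta B y $ a $ m * beta B y $ b $ n * G y $ m $ n)"
    by (rule gu_entry)
  also have "\<dots> = (\<Sum>n\<in>UNIV. \<Sum>m\<in>UNIV. beta B y $ a $ m * beta B y $ b $ n * G y $ m $ n)"
    by (rule sum.swap)
  also have "\<dots> = ghat_up G B y $ b $ a"
    unfolding gu_entry
  proof (intro sum.cong refl)
    fix m n show "beta B y $ a $ m * beta B y $ b $ n * G y $ m $ n = beta B y $ b $ n * beta B y $ a $ m * G y $ n $ m"
      using G_sym[OF y, of m n] by simp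
  qed
  finally show ?thesis .
qed

lemma gu_N: assumes y: "y \<in> U"
  shows "ghat_up G B y ** (transpose (B y) ** Ginv G y ** B y) = mat 1"
proof -
  let ?b = "beta B y" and ?N = "transpose (B y) ** Ginv G y ** B y"
  have Bb: "B y ** ?b = mat 1" unfolding beta_def using inv_mats[OF B_inv[OF y]] by simp
  have bB: "?b ** B y = mat 1" unfolding beta_def using inv_mats[OF B_inv[OF y]] by simp
  have GG: "G y ** Ginv G y = mat 1" unfolding Ginv_def using inv_mats[OF G_inv[OF y]] by simp
  have tt: "transpose ?b ** transpose (B y) = mat 1"
    using Bb by (metis matrix_transpose_mul transpose_mat)
  have "ghat_up G B y ** ?N = (?b ** G y) ** ((transpose ?b ** transpose (B y)) ** (Ginv G y ** B y))"
    unfolding gu_mat by (simp add: matrix_mul_assoc)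
  also have "\<dots> = ?b ** ((G y ** Ginv G y) ** B y)" unfolding tt by (simp add: matrix_mul_assoc)
  also have "\<dots> = mat 1" unfolding GG using bB by simp
  finally show ?thesis .
qed

lemma gu_invertible: "y \<in> U \<Longrightarrow> invertible (ghat_up G B y)"
  using gu_N invertible_right_inverse by blast

lemma gl_mat: assumes y: "y \<in> U"
  shows "ghat_low G B y = transpose (B y) ** Ginv G y ** B y"
  unfolding ghat_low_def by (rule inv_unique_right[OF gu_invertible[OF y] gu_N[OF y]])

lemma gl_gu: "y \<in> U \<Longrightarrow> (\<Sum>m\<in>UNIV. ghat_low G B y $ c $ m * ghat_up G B y $ m $ n) = (if c = n then 1 else 0)"
  unfolding ghat_low_def by (rule inv_left[OF gu_invertible])

lemma gl_entry: assumes y: "y \<in> U"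
  shows "ghat_low G B y $ a $ b = (\<Sum>k\<in>UNIV. \<Sum>l\<in>UNIV. B y $ k $ a * Ginv G y $ k $ l * B y $ l $ b)"
proof -
  have "ghat_low G B y $ a $ b = (\<Sum>l\<in>UNIV. \<Sum>k\<in>UNIV. B y $ k $ a * Ginv G y $ k $ l * B y $ l $ b)"
    unfolding gl_mat[OF y] by (simp add: mat_entry transpose_def sum_distrib_right)
  also have "\<dots> = (\<Sum>k\<in>UNIV. \<Sum>l\<in>UNIV. B y $ k $ a * Ginv G y $ k $ l * B y $ l $ b)"
    by (rule sum.swap)
  finally show ?thesis .
qed

abbreviation "bt y i j \<equiv> beta B y $ i $ j"
abbreviation "gg y i j \<equiv> G y $ i $ j"
abbreviation "BB y i j \<equiv> B y $ i $ j"
abbreviation "gi y i j \<equiv> Ginv G y $ i $ j"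
abbreviation "dbt k i j y \<equiv> pd k (\<lambda>z. beta B z $ i $ j) y"
abbreviation "dG k i j y \<equiv> pd k (\<lambda>z. G z $ i $ j) y"
abbreviation "dB k i j y \<equiv> pd k (\<lambda>z. B z $ i $ j) y"

definition Dbt where "Dbt a b p y = (\<Sum>j\<in>UNIV. bt y a j * dbt j b p y)"
definition Glow where "Glow s k l y = (1/2) * (dG k s l y + dG l s k y - dG s k l y)"
definition V where "V a b p y = Dbt a b p y + (\<Sum>k\<in>UNIV. \<Sum>l\<in>UNIV. bt y a k * bt y b l * christoffel G p k l y)"
definition Xh where "Xh c a b y = (\<Sum>p\<in>UNIV. BB y p c * V a b p y)"

lemma Dop_Dbt: "Dop B a (\<lambda>z. beta B z $ b $ p) y = Dbt a b p y"
  by (simp add: Dop_def Dbt_def)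

lemma dgu: assumes y: "y \<in> U"
  shows "pd j (\<lambda>z. ghat_up G B z $ b $ c) y = (\<Sum>m\<in>UNIV. \<Sum>n\<in>UNIV.
     dbt j b m y * bt y c n * gg y m n + bt y b m * dbt j c n y * gg y m n + bt y b m * bt y c n * dG j m n y)"
proof -
  have "pd j (\<lambda>z. ghat_up G B z $ b $ c) y = pd j (\<lambda>z. \<Sum>m\<in>UNIV. \<Sum>n\<in>UNIV. bt z b m * bt z c n * gg z m n) y"
    by (simp only: gu_entry)
  also have "\<dots> = (\<Sum>m\<in>UNIV. pd j (\<lambda>z. \<Sum>n\<in>UNIV. bt z b m * bt z c n * gg z m n) y)"
    by (rule pd_sum) (auto intro!: differentiable_sum differentiable_mult b_d[OF y] G_d[OF y])
  also have "\<dots> = (\<Sum>m\<in>UNIV. \<Sum>n\<in>UNIV. pd j (\<lambda>z. bt z b m * bt z c n * gg z m n) y)"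
    by (intro sum.cong refl pd_sum) (auto intro!: differentiable_sum differentiable_mult b_d[OF y] G_d[OF y])
  also have "\<dots> = (\<Sum>m\<in>UNIV. \<Sum>n\<in>UNIV.
     dbt j b m y * bt y c n * gg y m n + bt y b m * dbt j c n y * gg y m n + bt y b m * bt y c n * dG j m n y)"
    by (intro sum.cong refl)
       (simp add: pd_mult differentiable_mult b_d[OF y] G_d[OF y] algebra_simps)
  finally show ?thesis .
qed

lemma chr_low: assumes y: "y \<in> U"
  shows "(\<Sum>p\<in>UNIV. christoffel G p k l y * gg y p s) = Glow s k l y"
proof -
  let ?T = "\<lambda>d. dG k d l y + dG l d k y - dG d k l y"
  have "(\<Sum>p\<in>UNIV. christoffel G p k l y * gg y p s) = (\<Sum>p\<in>UNIV. \<Sum>d\<in>UNIV. (1/2) * (gg y s p * gi y p d * ?T d))"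
    unfolding christoffel_def
    by (intro sum.cong refl) (simp add: sum_distrib_left sum_distrib_right G_sym[OF y, of p s for p] mult_ac)
  also have "\<dots> = (\<Sum>d\<in>UNIV. \<Sum>p\<in>UNIV. (1/2) * (gg y s p * gi y p d * ?T d))" by (rule sum.swap)
  also have "\<dots> = (1/2) * (\<Sum>d\<in>UNIV. (\<Sum>p\<in>UNIV. gg y s p * gi y p d) * ?T d)"
    by (simp add: sum_distrib_left sum_distrib_right)
  also have "\<dots> = (1/2) * ?T s" by (simp only: Gg[OF y] sum_delta_l)
  finally show ?thesis by (simp add: Glow_def)
qed

lemma gu_split: "ghat_up G B y $ m $ c = (\<Sum>r\<in>UNIV. bt y m r * (\<Sum>s\<in>UNIV. bt y c s * gg y r s))"
  by (simp add: gu_entry sum_distrib_left mult.assoc)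

lemma Bb_contract: assumes y: "y \<in> U"
  shows "(\<Sum>m\<in>UNIV. (\<Sum>p\<in>UNIV. BB y p m * F p) * (\<Sum>r\<in>UNIV. bt y m r * H r)) = (\<Sum>p\<in>UNIV. F p * H p)"
proof -
  have "(\<Sum>m\<in>UNIV. (\<Sum>p\<in>UNIV. BB y p m * F p) * (\<Sum>r\<in>UNIV. bt y m r * H r))
      = (\<Sum>m\<in>UNIV. \<Sum>p\<in>UNIV. \<Sum>r\<in>UNIV. (BB y p m * bt y m r) * (F p * H r))"
    by (simp add: sum_product mult_ac)
  also have "\<dots> = (\<Sum>p\<in>UNIV. \<Sum>m\<in>UNIV. \<Sum>r\<in>UNIV. (BB y p m * bt y m r) * (F p * H r))"
    by (rule sum.swap)
  also have "\<dots> = (\<Sum>p\<in>UNIV. \<Sum>r\<in>UNIV. \<Sum>m\<in>UNIV. (BB y p m * bt y m r) * (F p * H r))"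
    by (intro sum.cong refl sum.swap)
  also have "\<dots> = (\<Sum>p\<in>UNIV. \<Sum>r\<in>UNIV. (\<Sum>m\<in>UNIV. BB y p m * bt y m r) * (F p * H r))"
    by (simp add: sum_distrib_right)
  also have "\<dots> = (\<Sum>p\<in>UNIV. F p * H p)" by (simp add: Bb[OF y])
  finally show ?thesis .
qed

lemma XG: assumes y: "y \<in> U"
  shows "(\<Sum>m\<in>UNIV. Xh m a b y * ghat_up G B y $ m $ c) = (\<Sum>p\<in>UNIV. V a b p y * (\<Sum>s\<in>UNIV. bt y c s * gg y p s))"
  unfolding Xh_def gu_split by (rule Bb_contract[OF y])

lemma sum_move_in2: "(\<Sum>p\<in>(UNIV::'a::finite set). \<Sum>k\<in>(UNIV::'b::finite set). \<Sum>l\<in>(UNIV::'c::finite set). f p k l :: real)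
   = (\<Sum>k\<in>UNIV. \<Sum>l\<in>UNIV. \<Sum>p\<in>UNIV. f p k l)"
proof -
  have "(\<Sum>p\<in>UNIV. \<Sum>k\<in>UNIV. \<Sum>l\<in>UNIV. f p k l) = (\<Sum>k\<in>UNIV. \<Sum>p\<in>UNIV. \<Sum>l\<in>UNIV. f p k l)"
    by (rule sum.swap)
  also have "\<dots> = (\<Sum>k\<in>UNIV. \<Sum>l\<in>UNIV. \<Sum>p\<in>UNIV. f p k l)"
    by (intro sum.cong refl sum.swap)
  finally show ?thesis .
qed

lemma sum_move_in3: "(\<Sum>p\<in>(UNIV::'a::finite set). \<Sum>k\<in>(UNIV::'b::finite set). \<Sum>l\<in>(UNIV::'c::finite set). \<Sum>s\<in>(UNIV::'d::finite set). f p k l s :: real)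
   = (\<Sum>k\<in>UNIV. \<Sum>l\<in>UNIV. \<Sum>s\<in>UNIV. \<Sum>p\<in>UNIV. f p k l s)"
proof -
  have "(\<Sum>p\<in>UNIV. \<Sum>k\<in>UNIV. \<Sum>l\<in>UNIV. \<Sum>s\<in>UNIV. f p k l s) = (\<Sum>k\<in>UNIV. \<Sum>l\<in>UNIV. \<Sum>p\<in>UNIV. \<Sum>s\<in>UNIV. f p k l s)"
    by (rule sum_move_in2)
  also have "\<dots> = (\<Sum>k\<in>UNIV. \<Sum>l\<in>UNIV. \<Sum>s\<in>UNIV. \<Sum>p\<in>UNIV. f p k l s)"
    by (intro sum.cong refl sum.swap)
  finally show ?thesis .
qed

lemma GP: assumes y: "y \<in> U"
  shows "(\<Sum>p\<in>UNIV. (\<Sum>k\<in>UNIV. \<Sum>l\<in>UNIV. bt y a k * bt y b l * christoffel G p k l y) * (\<Sum>s\<in>UNIV. bt y c s * gg y p s))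
    = (\<Sum>k\<in>UNIV. \<Sum>l\<in>UNIV. \<Sum>s\<in>UNIV. bt y a k * bt y b l * bt y c s * Glow s k l y)"
proof -
  have "(\<Sum>p\<in>UNIV. (\<Sum>k\<in>UNIV. \<Sum>l\<in>UNIV. bt y a k * bt y b l * christoffel G p k l y) * (\<Sum>s\<in>UNIV. bt y c s * gg y p s))
    = (\<Sum>p\<in>UNIV. \<Sum>k\<in>UNIV. \<Sum>l\<in>UNIV. \<Sum>s\<in>UNIV. (bt y a k * bt y b l * bt y c s) * (christoffel G p k l y * gg y p s))"
    by (simp add: sum_distrib_left sum_distrib_right mult_ac)
  also have "\<dots> = (\<Sum>k\<in>UNIV. \<Sum>l\<in>UNIV. \<Sum>s\<in>UNIV. \<Sum>p\<in>UNIV. (bt y a k * bt y b l * bt y c s) * (christoffel G p k l y * gg y p s))"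
    by (rule sum_move_in3)
  also have "\<dots> = (\<Sum>k\<in>UNIV. \<Sum>l\<in>UNIV. \<Sum>s\<in>UNIV. bt y a k * bt y b l * bt y c s * Glow s k l y)"
    by (simp add: sum_distrib_left[symmetric] chr_low[OF y])
  finally show ?thesis .
qed

lemma Glow_pair: assumes y: "y \<in> U" shows "Glow s k l y + Glow l k s y = dG k l s y"
  unfolding Glow_def using dG_sym[OF y, of k s l] dG_sym[OF y, of l s k] dG_sym[OF y, of s k l] by (simp add: field_simps)

lemma VH: assumes y: "y \<in> U"
  shows "(\<Sum>p\<in>UNIV. V a b p y * (\<Sum>s\<in>UNIV. bt y c s * gg y p s)) =
    (\<Sum>p\<in>UNIV. Dbt a b p y * (\<Sum>s\<in>UNIV. bt y c s * gg y p s))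
    + (\<Sum>k\<in>UNIV. \<Sum>l\<in>UNIV. \<Sum>s\<in>UNIV. bt y a k * bt y b l * bt y c s * Glow s k l y)"
  unfolding V_def GP[OF y, symmetric] by (simp add: distrib_right sum.distrib)

lemma met: assumes y: "y \<in> U"
  shows "Dop B a (\<lambda>z. ghat_up G B z $ b $ c) y =
     (\<Sum>m\<in>UNIV. Xh m a b y * ghat_up G B y $ m $ c + Xh m a c y * ghat_up G B y $ b $ m)"
proof -
  define D1 where "D1 = (\<Sum>p\<in>UNIV. Dbt a b p y * (\<Sum>s\<in>UNIV. bt y c s * gg y p s))"
  define D2 where "D2 = (\<Sum>p\<in>UNIV. Dbt a c p y * (\<Sum>s\<in>UNIV. bt y b s * gg y p s))"
  define C1 where "C1 = (\<Sum>k\<in>UNIV. \<Sum>l\<in>UNIV. \<Sum>s\<in>UNIV. bt y a k * bt y b l * bt y c s * Glow s k l y)"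
  define C2 where "C2 = (\<Sum>k\<in>UNIV. \<Sum>l\<in>UNIV. \<Sum>s\<in>UNIV. bt y a k * bt y c l * bt y b s * Glow s k l y)"
  have R: "(\<Sum>m\<in>UNIV. Xh m a b y * ghat_up G B y $ m $ c + Xh m a c y * ghat_up G B y $ b $ m) = D1 + C1 + (D2 + C2)"
  proof -
    have "(\<Sum>m\<in>UNIV. Xh m a b y * ghat_up G B y $ m $ c + Xh m a c y * ghat_up G B y $ b $ m)
      = (\<Sum>m\<in>UNIV. Xh m a b y * ghat_up G B y $ m $ c) + (\<Sum>m\<in>UNIV. Xh m a c y * ghat_up G B y $ m $ b)"
      by (simp add: sum.distrib gu_sym[OF y, of b])
    then show ?thesis unfolding XG[OF y] VH[OF y] D1_def D2_def C1_def C2_def .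
  qed
  have C: "C1 + C2 = (\<Sum>k\<in>UNIV. \<Sum>l\<in>UNIV. \<Sum>s\<in>UNIV. bt y a k * bt y b l * bt y c s * dG k l s y)"
  proof -
    have "C2 = (\<Sum>k\<in>UNIV. \<Sum>s\<in>UNIV. \<Sum>l\<in>UNIV. bt y a k * bt y c l * bt y b s * Glow s k l y)"
      unfolding C2_def by (intro sum.cong refl sum.swap)
    then have "C2 = (\<Sum>k\<in>UNIV. \<Sum>l\<in>UNIV. \<Sum>s\<in>UNIV. bt y a k * bt y b l * bt y c s * Glow l k s y)"
      by (simp add: mult_ac)
    then have "C1 + C2 = (\<Sum>k\<in>UNIV. \<Sum>l\<in>UNIV. \<Sum>s\<in>UNIV. bt y a k * bt y b l * bt y c s * (Glow s k l y + Glow l k s y))"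
      unfolding C1_def by (simp add: sum.distrib[symmetric] distrib_left)
    then show ?thesis by (simp only: Glow_pair[OF y])
  qed
  have L: "Dop B a (\<lambda>z. ghat_up G B z $ b $ c) y =
     (\<Sum>j\<in>UNIV. \<Sum>m\<in>UNIV. \<Sum>n\<in>UNIV. bt y a j * dbt j b m y * bt y c n * gg y m n)
   + (\<Sum>j\<in>UNIV. \<Sum>m\<in>UNIV. \<Sum>n\<in>UNIV. bt y a j * bt y b m * dbt j c n y * gg y m n)
   + (\<Sum>j\<in>UNIV. \<Sum>m\<in>UNIV. \<Sum>n\<in>UNIV. bt y a j * bt y b m * bt y c n * dG j m n y)"
    unfolding Dop_def dgu[OF y] by (simp add: sum_distrib_left sum.distrib distrib_left mult_ac)
  have A: "(\<Sum>j\<in>UNIV. \<Sum>m\<in>UNIV. \<Sum>n\<in>UNIV. bt y a j * dbt j b m y * bt y c n * gg y m n) = D1"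
  proof -
    have "(\<Sum>j\<in>UNIV. \<Sum>m\<in>UNIV. \<Sum>n\<in>UNIV. bt y a j * dbt j b m y * bt y c n * gg y m n)
        = (\<Sum>m\<in>UNIV. \<Sum>j\<in>UNIV. \<Sum>n\<in>UNIV. bt y a j * dbt j b m y * bt y c n * gg y m n)"
      by (rule sum.swap)
    also have "\<dots> = D1" unfolding D1_def Dbt_def
      by (simp add: sum_distrib_left sum_distrib_right mult_ac)
    finally show ?thesis .
  qed
  have Bt: "(\<Sum>j\<in>UNIV. \<Sum>m\<in>UNIV. \<Sum>n\<in>UNIV. bt y a j * bt y b m * dbt j c n y * gg y m n) = D2"
  proof -
    have "(\<Sum>j\<in>UNIV. \<Sum>m\<in>UNIV. \<Sum>n\<in>UNIV. bt y a j * bt y b m * dbt j c n y * gg y m n)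
        = (\<Sum>j\<in>UNIV. \<Sum>n\<in>UNIV. \<Sum>m\<in>UNIV. bt y a j * bt y b m * dbt j c n y * gg y m n)"
      by (intro sum.cong refl sum.swap)
    also have "\<dots> = (\<Sum>n\<in>UNIV. \<Sum>j\<in>UNIV. \<Sum>m\<in>UNIV. bt y a j * bt y b m * dbt j c n y * gg y m n)"
      by (rule sum.swap)
    also have "\<dots> = (\<Sum>n\<in>UNIV. \<Sum>j\<in>UNIV. \<Sum>m\<in>UNIV. bt y a j * bt y b m * dbt j c n y * gg y n m)"
      by (intro sum.cong refl) (subst G_sym[OF y], rule refl)
    also have "\<dots> = D2" unfolding D2_def Dbt_def
      by (simp add: sum_distrib_left sum_distrib_right mult_ac)
    finally show ?thesis .
  qed
  show ?thesis unfolding L A Bt R using C by linarith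
qed

lemma bB_anti: assumes y: "y \<in> U"
  shows "(\<Sum>n\<in>UNIV. bt y n m * BB y n c) = - (if m = c then 1 else 0)"
proof -
  have "(\<Sum>n\<in>UNIV. bt y n m * BB y n c) = (\<Sum>n\<in>UNIV. - (bt y m n * BB y n c))"
    by (intro sum.cong refl) (simp add: b_anti[OF y, of n m for n])
  also have "\<dots> = - (if m = c then 1 else 0)" by (simp add: sum_negf bB[OF y])
  finally show ?thesis .
qed

lemma Theta_form: assumes y: "y \<in> U"
  shows "Theta_up B a b n y = Dbt a b n y - Dbt b a n y + (\<Sum>m\<in>UNIV. bt y n m * dbt m a b y)"
proof -
  have "(\<Sum>m\<in>UNIV. bt y b m * dbt m n a y) = - Dbt b a n y"
    unfolding Dbt_def by (simp add: db_anti[OF y, of _ n a] sum_negf)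
  then show ?thesis unfolding Theta_up_def Dbt_def by (simp add: sum.distrib)
qed

lemma Q_form: assumes y: "y \<in> U"
  shows "Qf B c a b y = (\<Sum>n\<in>UNIV. BB y n c * (Dbt a b n y - Dbt b a n y))"
proof -
  have "(\<Sum>n\<in>UNIV. (\<Sum>m\<in>UNIV. bt y n m * dbt m a b y) * BB y n c) = (\<Sum>m\<in>UNIV. \<Sum>n\<in>UNIV. dbt m a b y * (bt y n m * BB y n c))"
  proof -
    have "(\<Sum>n\<in>UNIV. (\<Sum>m\<in>UNIV. bt y n m * dbt m a b y) * BB y n c) = (\<Sum>n\<in>UNIV. \<Sum>m\<in>UNIV. dbt m a b y * (bt y n m * BB y n c))"
      by (simp add: sum_distrib_right sum_distrib_left mult_ac)
    also have "\<dots> = (\<Sum>m\<in>UNIV. \<Sum>n\<in>UNIV. dbt m a b y * (bt y n m * BB y n c))" by (rule sum.swap)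
    finally show ?thesis .
  qed
  also have "\<dots> = (\<Sum>m\<in>UNIV. dbt m a b y * (- (if m = c then 1 else 0)))"
    by (simp add: sum_distrib_left[symmetric] bB_anti[OF y])
  also have "\<dots> = - dbt c a b y" by (simp add: sum_negf)
  finally have e: "(\<Sum>n\<in>UNIV. (\<Sum>m\<in>UNIV. bt y n m * dbt m a b y) * BB y n c) = - dbt c a b y" .
  have "Qf B c a b y = dbt c a b y + (\<Sum>n\<in>UNIV. (Dbt a b n y - Dbt b a n y) * BB y n c)
        + (\<Sum>n\<in>UNIV. (\<Sum>m\<in>UNIV. bt y n m * dbt m a b y) * BB y n c)"
    unfolding Qf_def Theta_form[OF y] by (simp add: distrib_right sum.distrib)
  then show ?thesis unfolding e by (simp add: mult.commute)
qed

lemma V_diff: assumes y: "y \<in> U" shows "V a b p y - V b a p y = Dbt a b p y - Dbt b a p y"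
proof -
  have "(\<Sum>k\<in>UNIV. \<Sum>l\<in>UNIV. bt y b k * bt y a l * christoffel G p k l y)
      = (\<Sum>l\<in>UNIV. \<Sum>k\<in>UNIV. bt y b k * bt y a l * christoffel G p k l y)" by (rule sum.swap)
  also have "\<dots> = (\<Sum>k\<in>UNIV. \<Sum>l\<in>UNIV. bt y a k * bt y b l * christoffel G p k l y)"
    by (intro sum.cong refl) (simp add: chris_sym[OF y, of p] mult_ac)
  finally show ?thesis unfolding V_def by simp
qed

lemma tor: assumes y: "y \<in> U" shows "Xh c a b y - Xh c b a y = Qf B c a b y"
  unfolding Xh_def Q_form[OF y] by (simp add: sum_subtractf[symmetric] right_diff_distrib[symmetric] V_diff[OF y])

lemma stepB: assumes y: "y \<in> U" shows "Gamma_hat G B c a b y = Xh c a b y"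
  unfolding Gamma_hat_def
  by (rule koszul[where gu = "\<lambda>a b. ghat_up G B y $ a $ b" and gl = "\<lambda>a b. ghat_low G B y $ a $ b"
      and Dg = "\<lambda>a b c. Dop B a (\<lambda>z. ghat_up G B z $ b $ c) y" and X = "\<lambda>c a b. Xh c a b y"
      and Q = "\<lambda>c a b. Qf B c a b y", OF gl_gu[OF y] gu_sym[OF y] met[OF y] tor[OF y]])

end


context ctx begin

lemma Dbt_fun: "Dbt a b p = (\<lambda>y. \<Sum>j\<in>UNIV. bt y a j * dbt j b p y)"
  by (rule ext) (simp add: Dbt_def)
lemma V_fun: "V a b p = (\<lambda>y. Dbt a b p y + (\<Sum>k\<in>UNIV. \<Sum>l\<in>UNIV. bt y a k * bt y b l * christoffel G p k l y))"
  by (rule ext) (simp add: V_def)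

lemma Dbt_d: "x \<in> U \<Longrightarrow> Dbt a b p differentiable at x"
  unfolding Dbt_fun by (intro differentiable_sum ballI finite differentiable_mult b_d db_d)

lemma V_d: "x \<in> U \<Longrightarrow> V a b p differentiable at x"
  unfolding V_fun by (intro differentiable_add differentiable_sum ballI finite differentiable_mult b_d chris_d Dbt_d)

lemma Gh_pd: assumes x: "x \<in> U"
  shows "pd j (Gamma_hat G B a d b) x = (\<Sum>p\<in>UNIV. BB x p a * pd j (V d b p) x + dB j p a x * V d b p x)"
proof -
  have "pd j (Gamma_hat G B a d b) x = pd j (\<lambda>y. \<Sum>p\<in>UNIV. BB y p a * V d b p y) x"
    by (rule pd_local[OF U x]) (simp add: stepB Xh_def)
  also have "\<dots> = (\<Sum>p\<in>UNIV. pd j (\<lambda>y. BB y p a * V d b p y) x)"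
    by (rule pd_sum) (auto intro!: differentiable_mult B_d[OF x] V_d[OF x])
  also have "\<dots> = (\<Sum>p\<in>UNIV. BB x p a * pd j (V d b p) x + dB j p a x * V d b p x)"
    by (intro sum.cong refl) (simp add: pd_mult B_d[OF x] V_d[OF x])
  finally show ?thesis .
qed

lemma dBb: assumes x: "x \<in> U"
  shows "(\<Sum>m\<in>UNIV. BB x q m * dbt j m p x) = - (\<Sum>m\<in>UNIV. dB j q m x * bt x m p)"
proof -
  have "pd j (\<lambda>y. \<Sum>m\<in>UNIV. BB y q m * bt y m p) x = pd j (\<lambda>y. if q = p then 1 else 0) x"
    by (rule pd_local[OF U x]) (simp add: Bb)
  also have "\<dots> = 0" by simp
  finally have "pd j (\<lambda>y. \<Sum>m\<in>UNIV. BB y q m * bt y m p) x = 0" .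
  moreover have "pd j (\<lambda>y. \<Sum>m\<in>UNIV. BB y q m * bt y m p) x = (\<Sum>m\<in>UNIV. BB x q m * dbt j m p x + dB j q m x * bt x m p)"
    by (subst pd_sum) (auto intro!: sum.cong pd_mult B_d[OF x] b_d[OF x] differentiable_mult)
  ultimately show ?thesis by (simp add: sum.distrib eq_neg_iff_add_eq_0)
qed

definition W where "W c d b p y = Dop B c (V d b p) y
   + (\<Sum>k\<in>UNIV. \<Sum>q\<in>UNIV. bt y c k * christoffel G p k q y * V d b q y)"

lemma BV: assumes x: "x \<in> U"
  shows "(\<Sum>m\<in>UNIV. BB x q m * V c m p x) =
    - (\<Sum>j\<in>UNIV. \<Sum>m\<in>UNIV. bt x c j * dB j q m x * bt x m p) + (\<Sum>k\<in>UNIV. bt x c k * christoffel G p k q x)"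
proof -
  have e1: "(\<Sum>m\<in>UNIV. BB x q m * Dbt c m p x) = - (\<Sum>j\<in>UNIV. \<Sum>m\<in>UNIV. bt x c j * dB j q m x * bt x m p)"
  proof -
    have "(\<Sum>m\<in>UNIV. BB x q m * Dbt c m p x) = (\<Sum>m\<in>UNIV. \<Sum>j\<in>UNIV. bt x c j * (BB x q m * dbt j m p x))"
      unfolding Dbt_def by (simp add: sum_distrib_left mult_ac)
    also have "\<dots> = (\<Sum>j\<in>UNIV. \<Sum>m\<in>UNIV. bt x c j * (BB x q m * dbt j m p x))" by (rule sum.swap)
    also have "\<dots> = (\<Sum>j\<in>UNIV. bt x c j * (- (\<Sum>m\<in>UNIV. dB j q m x * bt x m p)))"
      by (simp add: sum_distrib_left[symmetric] dBb[OF x])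
    also have "\<dots> = - (\<Sum>j\<in>UNIV. \<Sum>m\<in>UNIV. bt x c j * dB j q m x * bt x m p)"
      by (simp add: sum_distrib_left sum_negf mult_ac)
    finally show ?thesis .
  qed
  have e2: "(\<Sum>m\<in>UNIV. BB x q m * (\<Sum>k\<in>UNIV. \<Sum>l\<in>UNIV. bt x c k * bt x m l * christoffel G p k l x))
     = (\<Sum>k\<in>UNIV. bt x c k * christoffel G p k q x)"
  proof -
    have "(\<Sum>m\<in>UNIV. BB x q m * (\<Sum>k\<in>UNIV. \<Sum>l\<in>UNIV. bt x c k * bt x m l * christoffel G p k l x))
      = (\<Sum>m\<in>UNIV. \<Sum>k\<in>UNIV. \<Sum>l\<in>UNIV. (bt x c k * christoffel G p k l x) * (BB x q m * bt x m l))"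
      by (simp add: sum_distrib_left mult_ac)
    also have "\<dots> = (\<Sum>k\<in>UNIV. \<Sum>l\<in>UNIV. \<Sum>m\<in>UNIV. (bt x c k * christoffel G p k l x) * (BB x q m * bt x m l))"
      by (rule sum_move_in2)
    also have "\<dots> = (\<Sum>k\<in>UNIV. \<Sum>l\<in>UNIV. (bt x c k * christoffel G p k l x) * (if q = l then 1 else 0))"
      by (simp add: sum_distrib_left[symmetric] Bb[OF x])
    also have "\<dots> = (\<Sum>k\<in>UNIV. bt x c k * christoffel G p k q x)" by simp
    finally show ?thesis .
  qed
  show ?thesis unfolding V_def using e1 e2 by (simp add: distrib_left sum.distrib)
qed

lemma C1: assumes x: "x \<in> U"
  shows "Dop B c (Gamma_hat G B a d b) x + (\<Sum>m\<in>UNIV. Gamma_hat G B a c m x * Gamma_hat G B m d b x)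
    = (\<Sum>p\<in>UNIV. BB x p a * W c d b p x)"
proof -
  define K where "K = (\<Sum>q\<in>UNIV. V d b q x * (\<Sum>j\<in>UNIV. bt x c j * dB j q a x))"
  have L1: "Dop B c (Gamma_hat G B a d b) x = (\<Sum>p\<in>UNIV. BB x p a * Dop B c (V d b p) x) + K"
  proof -
    have "Dop B c (Gamma_hat G B a d b) x = (\<Sum>j\<in>UNIV. \<Sum>p\<in>UNIV. BB x p a * (bt x c j * pd j (V d b p) x) + V d b p x * (bt x c j * dB j p a x))"
      unfolding Dop_def Gh_pd[OF x] by (simp add: sum_distrib_left algebra_simps)
    also have "\<dots> = (\<Sum>p\<in>UNIV. \<Sum>j\<in>UNIV. BB x p a * (bt x c j * pd j (V d b p) x) + V d b p x * (bt x c j * dB j p a x))"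
      by (rule sum.swap)
    also have "\<dots> = (\<Sum>p\<in>UNIV. BB x p a * Dop B c (V d b p) x) + K"
      unfolding K_def Dop_def by (simp add: sum.distrib sum_distrib_left)
    finally show ?thesis .
  qed
  have L2: "(\<Sum>m\<in>UNIV. Gamma_hat G B a c m x * Gamma_hat G B m d b x)
     = (\<Sum>p\<in>UNIV. BB x p a * (\<Sum>q\<in>UNIV. V d b q x * (\<Sum>m\<in>UNIV. BB x q m * V c m p x)))"
  proof -
    have "(\<Sum>m\<in>UNIV. Gamma_hat G B a c m x * Gamma_hat G B m d b x)
       = (\<Sum>m\<in>UNIV. \<Sum>q\<in>UNIV. \<Sum>p\<in>UNIV. BB x q m * (BB x p a * (V c m p x * V d b q x)))"
      unfolding stepB[OF x] Xh_def by (simp add: sum_product mult_ac)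
    also have "\<dots> = (\<Sum>q\<in>UNIV. \<Sum>p\<in>UNIV. \<Sum>m\<in>UNIV. BB x q m * (BB x p a * (V c m p x * V d b q x)))"
      by (rule sum_move_in2)
    also have "\<dots> = (\<Sum>p\<in>UNIV. \<Sum>q\<in>UNIV. \<Sum>m\<in>UNIV. BB x q m * (BB x p a * (V c m p x * V d b q x)))"
      by (rule sum.swap)
    also have "\<dots> = (\<Sum>p\<in>UNIV. BB x p a * (\<Sum>q\<in>UNIV. V d b q x * (\<Sum>m\<in>UNIV. BB x q m * V c m p x)))"
      by (simp add: sum_distrib_left mult_ac)
    finally show ?thesis .
  qed
  have L3: "(\<Sum>p\<in>UNIV. BB x p a * (\<Sum>q\<in>UNIV. V d b q x * (\<Sum>j\<in>UNIV. \<Sum>m\<in>UNIV. bt x c j * dB j q m x * bt x m p))) = K"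
  proof -
    have "(\<Sum>p\<in>UNIV. BB x p a * (\<Sum>q\<in>UNIV. V d b q x * (\<Sum>j\<in>UNIV. \<Sum>m\<in>UNIV. bt x c j * dB j q m x * bt x m p)))
      = (\<Sum>p\<in>UNIV. \<Sum>q\<in>UNIV. \<Sum>j\<in>UNIV. \<Sum>m\<in>UNIV. (V d b q x * bt x c j * dB j q m x) * (bt x m p * BB x p a))"
      by (simp add: sum_distrib_left mult_ac)
    also have "\<dots> = (\<Sum>q\<in>UNIV. \<Sum>j\<in>UNIV. \<Sum>m\<in>UNIV. \<Sum>p\<in>UNIV. (V d b q x * bt x c j * dB j q m x) * (bt x m p * BB x p a))"
      by (rule sum_move_in3)
    also have "\<dots> = (\<Sum>q\<in>UNIV. \<Sum>j\<in>UNIV. \<Sum>m\<in>UNIV. (V d b q x * bt x c j * dB j q m x) * (if m = a then 1 else 0))"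
      by (simp add: sum_distrib_left[symmetric] bB[OF x])
    also have "\<dots> = K" unfolding K_def by (simp add: sum_distrib_left mult_ac)
    finally show ?thesis .
  qed
  have L4: "(\<Sum>p\<in>UNIV. BB x p a * (\<Sum>q\<in>UNIV. V d b q x * (\<Sum>m\<in>UNIV. BB x q m * V c m p x)))
    = - K + (\<Sum>p\<in>UNIV. BB x p a * (\<Sum>q\<in>UNIV. V d b q x * (\<Sum>k\<in>UNIV. bt x c k * christoffel G p k q x)))"
    unfolding BV[OF x] L3[symmetric]
    by (simp add: distrib_left right_diff_distrib sum.distrib sum_subtractf sum_negf)
  have L5: "(\<Sum>p\<in>UNIV. BB x p a * W c d b p x) = (\<Sum>p\<in>UNIV. BB x p a * Dop B c (V d b p) x)
     + (\<Sum>p\<in>UNIV. BB x p a * (\<Sum>q\<in>UNIV. V d b q x * (\<Sum>k\<in>UNIV. bt x c k * christoffel G p k q x)))"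
  proof -
    have "(\<Sum>k\<in>UNIV. \<Sum>q\<in>UNIV. bt x c k * christoffel G p k q x * V d b q x)
       = (\<Sum>q\<in>UNIV. V d b q x * (\<Sum>k\<in>UNIV. bt x c k * christoffel G p k q x))" for p
    proof -
      have "(\<Sum>k\<in>UNIV. \<Sum>q\<in>UNIV. bt x c k * christoffel G p k q x * V d b q x)
        = (\<Sum>q\<in>UNIV. \<Sum>k\<in>UNIV. bt x c k * christoffel G p k q x * V d b q x)" by (rule sum.swap)
      then show ?thesis by (simp add: sum_distrib_left mult_ac)
    qed
    then show ?thesis unfolding W_def by (simp add: distrib_left sum.distrib)
  qed
  show ?thesis unfolding L1 L2 L4 L5 by simp
qed

lemma R4_form: assumes x: "x \<in> U"
  shows "R_hat4 G B a b c d x = (\<Sum>p\<in>UNIV. BB x p a * (W c d b p x - W d c b p x - (\<Sum>m\<in>UNIV. Qf B m c d x * V m b p x)))"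
proof -
  have q: "(\<Sum>m\<in>UNIV. Gamma_hat G B a m b x * Qf B m c d x) = (\<Sum>p\<in>UNIV. BB x p a * (\<Sum>m\<in>UNIV. Qf B m c d x * V m b p x))"
  proof -
    have "(\<Sum>m\<in>UNIV. Gamma_hat G B a m b x * Qf B m c d x) = (\<Sum>m\<in>UNIV. \<Sum>p\<in>UNIV. BB x p a * (Qf B m c d x * V m b p x))"
      unfolding stepB[OF x] Xh_def by (simp add: sum_distrib_right sum_distrib_left mult_ac)
    also have "\<dots> = (\<Sum>p\<in>UNIV. \<Sum>m\<in>UNIV. BB x p a * (Qf B m c d x * V m b p x))" by (rule sum.swap)
    also have "\<dots> = (\<Sum>p\<in>UNIV. BB x p a * (\<Sum>m\<in>UNIV. Qf B m c d x * V m b p x))" by (simp add: sum_distrib_left)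
    finally show ?thesis .
  qed
  have "R_hat4 G B a b c d x = (Dop B c (Gamma_hat G B a d b) x + (\<Sum>m\<in>UNIV. Gamma_hat G B a c m x * Gamma_hat G B m d b x))
     - (Dop B d (Gamma_hat G B a c b) x + (\<Sum>m\<in>UNIV. Gamma_hat G B a d m x * Gamma_hat G B m c b x))
     - (\<Sum>m\<in>UNIV. Gamma_hat G B a m b x * Qf B m c d x)"
    unfolding R_hat4_def by (simp add: sum_subtractf)
  also have "\<dots> = (\<Sum>p\<in>UNIV. BB x p a * W c d b p x) - (\<Sum>p\<in>UNIV. BB x p a * W d c b p x)
      - (\<Sum>p\<in>UNIV. BB x p a * (\<Sum>m\<in>UNIV. Qf B m c d x * V m b p x))"
    unfolding C1[OF x] q ..
  also have "\<dots> = (\<Sum>p\<in>UNIV. BB x p a * (W c d b p x - W d c b p x - (\<Sum>m\<in>UNIV. Qf B m c d x * V m b p x)))"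
    by (simp add: right_diff_distrib sum_subtractf)
  finally show ?thesis .
qed

lemma pdDbt: assumes x: "x \<in> U"
  shows "pd j (Dbt d b p) x = (\<Sum>k\<in>UNIV. dbt j d k x * dbt k b p x + bt x d k * pd j (pd k (\<lambda>z. beta B z $ b $ p)) x)"
  unfolding Dbt_fun
  by (subst pd_sum) (auto intro!: sum.cong simp: pd_mult b_d[OF x] db_d[OF x] differentiable_mult)

lemma pdChr: assumes x: "x \<in> U"
  shows "pd j (\<lambda>y. \<Sum>k\<in>UNIV. \<Sum>l\<in>UNIV. bt y d k * bt y b l * christoffel G p k l y) x =
    (\<Sum>k\<in>UNIV. \<Sum>l\<in>UNIV. dbt j d k x * bt x b l * christoffel G p k l x + bt x d k * dbt j b l x * christoffel G p k l x
       + bt x d k * bt x b l * pd j (christoffel G p k l) x)"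
proof -
  have "pd j (\<lambda>y. \<Sum>k\<in>UNIV. \<Sum>l\<in>UNIV. bt y d k * bt y b l * christoffel G p k l y) x =
     (\<Sum>k\<in>UNIV. pd j (\<lambda>y. \<Sum>l\<in>UNIV. bt y d k * bt y b l * christoffel G p k l y) x)"
    by (rule pd_sum) (auto intro!: differentiable_sum differentiable_mult b_d[OF x] chris_d[OF x])
  also have "\<dots> = (\<Sum>k\<in>UNIV. \<Sum>l\<in>UNIV. pd j (\<lambda>y. bt y d k * bt y b l * christoffel G p k l y) x)"
    by (intro sum.cong refl pd_sum) (auto intro!: differentiable_mult b_d[OF x] chris_d[OF x])
  also have "\<dots> = (\<Sum>k\<in>UNIV. \<Sum>l\<in>UNIV. dbt j d k x * bt x b l * christoffel G p k l x + bt x d k * dbt j b l x * christoffel G p k l x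
       + bt x d k * bt x b l * pd j (christoffel G p k l) x)"
  proof (intro sum.cong refl)
    fix k l
    have "pd j (\<lambda>y. bt y d k * bt y b l * christoffel G p k l y) x =
        (bt x d k * bt x b l) * pd j (christoffel G p k l) x + pd j (\<lambda>y. bt y d k * bt y b l) x * christoffel G p k l x"
      by (rule pd_mult) (auto intro!: differentiable_mult b_d[OF x] chris_d[OF x])
    also have "pd j (\<lambda>y. bt y d k * bt y b l) x = bt x d k * dbt j b l x + dbt j d k x * bt x b l"
      by (rule pd_mult) (auto intro!: b_d[OF x])
    finally show "pd j (\<lambda>y. bt y d k * bt y b l * christoffel G p k l y) x =
      dbt j d k x * bt x b l * christoffel G p k l x + bt x d k * dbt j b l x * christoffel G p k l x
       + bt x d k * bt x b l * pd j (christoffel G p k l) x" by (simp add: algebra_simps)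
  qed
  finally show ?thesis .
qed

lemma pdV: assumes x: "x \<in> U"
  shows "pd j (V d b p) x = pd j (Dbt d b p) x + pd j (\<lambda>y. \<Sum>k\<in>UNIV. \<Sum>l\<in>UNIV. bt y d k * bt y b l * christoffel G p k l y) x"
  unfolding V_fun
  by (rule pd_add) (auto intro!: Dbt_d[OF x] differentiable_sum differentiable_mult b_d[OF x] chris_d[OF x])

end


context ctx begin

lemma C2: assumes x: "x \<in> U"
  shows "W c d b p x - W d c b p x - (\<Sum>m\<in>UNIV. Qf B m c d x * V m b p x)
    = (\<Sum>j\<in>UNIV. \<Sum>k\<in>UNIV. \<Sum>l\<in>UNIV. bt x c j * bt x d k * bt x b l * riemann G p l j k x)"
proof -
  let ?C = "\<lambda>k l. christoffel G p k l x"
  let ?dd = "\<lambda>j k. pd j (pd k (\<lambda>z. beta B z $ b $ p)) x"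
  define E1 where "E1 c d = (\<Sum>k\<in>UNIV. Dbt c d k x * dbt k b p x)" for c d
  define E2 where "E2 c d = (\<Sum>j\<in>UNIV. \<Sum>k\<in>UNIV. bt x c j * bt x d k * ?dd j k)" for c d
  define E3 where "E3 c d = (\<Sum>k\<in>UNIV. \<Sum>l\<in>UNIV. Dbt c d k x * bt x b l * ?C k l)" for c d
  define E4 where "E4 c d = (\<Sum>k\<in>UNIV. \<Sum>l\<in>UNIV. bt x d k * Dbt c b l x * ?C k l)" for c d
  define E5 where "E5 c d = (\<Sum>j\<in>UNIV. \<Sum>k\<in>UNIV. \<Sum>l\<in>UNIV. bt x c j * bt x d k * bt x b l * pd j (christoffel G p k l) x)" for c d
  define E6 where "E6 c d = (\<Sum>k\<in>UNIV. \<Sum>q\<in>UNIV. bt x c k * ?C k q * Dbt d b q x)" for c d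
  define E7 where "E7 c d = (\<Sum>k\<in>UNIV. \<Sum>q\<in>UNIV. bt x c k * ?C k q *
        (\<Sum>k'\<in>UNIV. \<Sum>l'\<in>UNIV. bt x d k' * bt x b l' * christoffel G q k' l' x))" for c d
  have DopV: "Dop B c (V d b p) x = E1 c d + E2 c d + E3 c d + E4 c d + E5 c d" for c d
  proof -
    have exp: "Dop B c (V d b p) x =
        (\<Sum>j\<in>UNIV. \<Sum>k\<in>UNIV. bt x c j * (dbt j d k x * dbt k b p x))
      + (\<Sum>j\<in>UNIV. \<Sum>k\<in>UNIV. bt x c j * (bt x d k * ?dd j k))
      + (\<Sum>j\<in>UNIV. \<Sum>k\<in>UNIV. \<Sum>l\<in>UNIV. bt x c j * (dbt j d k x * bt x b l * ?C k l))
      + (\<Sum>j\<in>UNIV. \<Sum>k\<in>UNIV. \<Sum>l\<in>UNIV. bt x c j * (bt x d k * dbt j b l x * ?C k l))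
      + (\<Sum>j\<in>UNIV. \<Sum>k\<in>UNIV. \<Sum>l\<in>UNIV. bt x c j * (bt x d k * bt x b l * pd j (christoffel G p k l) x))"
      unfolding Dop_def pdV[OF x] pdDbt[OF x] pdChr[OF x]
      by (simp add: distrib_left sum.distrib sum_distrib_left)
    have a: "(\<Sum>j\<in>UNIV. \<Sum>k\<in>UNIV. bt x c j * (dbt j d k x * dbt k b p x)) = E1 c d"
    proof -
      have "(\<Sum>j\<in>UNIV. \<Sum>k\<in>UNIV. bt x c j * (dbt j d k x * dbt k b p x)) = (\<Sum>k\<in>UNIV. \<Sum>j\<in>UNIV. bt x c j * (dbt j d k x * dbt k b p x))"
        by (rule sum.swap)
      then show ?thesis unfolding E1_def Dbt_def by (simp add: sum_distrib_right sum_distrib_left mult_ac)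
    qed
    have b: "(\<Sum>j\<in>UNIV. \<Sum>k\<in>UNIV. bt x c j * (bt x d k * ?dd j k)) = E2 c d"
      unfolding E2_def by (simp add: mult_ac)
    have c: "(\<Sum>j\<in>UNIV. \<Sum>k\<in>UNIV. \<Sum>l\<in>UNIV. bt x c j * (dbt j d k x * bt x b l * ?C k l)) = E3 c d"
    proof -
      have "(\<Sum>j\<in>UNIV. \<Sum>k\<in>UNIV. \<Sum>l\<in>UNIV. bt x c j * (dbt j d k x * bt x b l * ?C k l))
         = (\<Sum>k\<in>UNIV. \<Sum>l\<in>UNIV. \<Sum>j\<in>UNIV. bt x c j * (dbt j d k x * bt x b l * ?C k l))"
        by (rule sum_move_in2)
      then show ?thesis unfolding E3_def Dbt_def by (simp add: sum_distrib_right sum_distrib_left mult_ac)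
    qed
    have d: "(\<Sum>j\<in>UNIV. \<Sum>k\<in>UNIV. \<Sum>l\<in>UNIV. bt x c j * (bt x d k * dbt j b l x * ?C k l)) = E4 c d"
    proof -
      have "(\<Sum>j\<in>UNIV. \<Sum>k\<in>UNIV. \<Sum>l\<in>UNIV. bt x c j * (bt x d k * dbt j b l x * ?C k l))
         = (\<Sum>k\<in>UNIV. \<Sum>l\<in>UNIV. \<Sum>j\<in>UNIV. bt x c j * (bt x d k * dbt j b l x * ?C k l))"
        by (rule sum_move_in2)
      then show ?thesis unfolding E4_def Dbt_def by (simp add: sum_distrib_right sum_distrib_left mult_ac)
    qed
    have e: "(\<Sum>j\<in>UNIV. \<Sum>k\<in>UNIV. \<Sum>l\<in>UNIV. bt x c j * (bt x d k * bt x b l * pd j (christoffel G p k l) x)) = E5 c d"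
      unfolding E5_def by (simp add: mult_ac)
    show ?thesis unfolding exp a b c d e ..
  qed
  have W_E: "W c d b p x = E1 c d + E2 c d + E3 c d + E4 c d + E5 c d + E6 c d + E7 c d" for c d
    unfolding W_def DopV E6_def E7_def V_def by (simp add: distrib_left sum.distrib)
  have QV: "(\<Sum>m\<in>UNIV. Qf B m c d x * V m b p x) = E1 c d - E1 d c + (E3 c d - E3 d c)"
  proof -
    have Vs: "V m b p x = (\<Sum>k\<in>UNIV. bt x m k * (dbt k b p x + (\<Sum>l\<in>UNIV. bt x b l * ?C k l)))" for m
      unfolding V_def Dbt_def by (simp add: distrib_left sum.distrib sum_distrib_left mult_ac)
    have "(\<Sum>m\<in>UNIV. Qf B m c d x * V m b p x) =
        (\<Sum>k\<in>UNIV. (Dbt c d k x - Dbt d c k x) * (dbt k b p x + (\<Sum>l\<in>UNIV. bt x b l * ?C k l)))"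
      unfolding Q_form[OF x] Vs by (rule Bb_contract[OF x])
    also have "\<dots> = E1 c d - E1 d c + (E3 c d - E3 d c)"
      unfolding E1_def E3_def
      by (simp add: algebra_simps sum.distrib sum_subtractf sum_distrib_left)
    finally show ?thesis .
  qed
  have e2: "E2 c d = E2 d c"
  proof -
    have "E2 d c = (\<Sum>k\<in>UNIV. \<Sum>j\<in>UNIV. bt x d j * bt x c k * ?dd j k)" unfolding E2_def by (rule sum.swap)
    also have "\<dots> = E2 c d" unfolding E2_def
      by (intro sum.cong refl) (simp add: ddb_sym[OF x] mult_ac)
    finally show ?thesis by simp
  qed
  have e46: "E4 c' d' = E6 d' c'" for c' d'
    unfolding E4_def E6_def by (simp add: mult_ac)
  have R: "(\<Sum>j\<in>UNIV. \<Sum>k\<in>UNIV. \<Sum>l\<in>UNIV. bt x c j * bt x d k * bt x b l * riemann G p l j k x)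
     = E5 c d - E5 d c + (E7 c d - E7 d c)"
  proof -
    define R3 where "R3 = (\<Sum>j\<in>UNIV. \<Sum>k\<in>UNIV. \<Sum>l\<in>UNIV. \<Sum>e\<in>UNIV. bt x c j * bt x d k * bt x b l * (?C j e * christoffel G e k l x))"
    define R4 where "R4 = (\<Sum>j\<in>UNIV. \<Sum>k\<in>UNIV. \<Sum>l\<in>UNIV. \<Sum>e\<in>UNIV. bt x c j * bt x d k * bt x b l * (?C k e * christoffel G e j l x))"
    define R2 where "R2 = (\<Sum>j\<in>UNIV. \<Sum>k\<in>UNIV. \<Sum>l\<in>UNIV. bt x c j * bt x d k * bt x b l * pd k (christoffel G p j l) x)"
    have split: "(\<Sum>j\<in>UNIV. \<Sum>k\<in>UNIV. \<Sum>l\<in>UNIV. bt x c j * bt x d k * bt x b l * riemann G p l j k x)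
       = E5 c d - R2 + (R3 - R4)"
      unfolding riemann_def E5_def R2_def R3_def R4_def
      by (simp add: algebra_simps sum.distrib sum_subtractf sum_distrib_left)
    have r2: "R2 = E5 d c"
    proof -
      have "E5 d c = (\<Sum>k\<in>UNIV. \<Sum>j\<in>UNIV. \<Sum>l\<in>UNIV. bt x d j * bt x c k * bt x b l * pd j (christoffel G p k l) x)"
        unfolding E5_def by (rule sum.swap)
      then show ?thesis unfolding R2_def by (simp add: mult_ac)
    qed
    have r3: "R3 = E7 c d"
    proof -
      have "E7 c d = (\<Sum>j\<in>UNIV. \<Sum>e\<in>UNIV. \<Sum>k\<in>UNIV. \<Sum>l\<in>UNIV. bt x c j * bt x d k * bt x b l * (?C j e * christoffel G e k l x))"
        unfolding E7_def by (simp add: sum_distrib_left mult_ac)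
      also have "\<dots> = R3" unfolding R3_def by (intro sum.cong refl sum_move_in2)
      finally show ?thesis by simp
    qed
    have r4: "R4 = E7 d c"
    proof -
      have "E7 d c = (\<Sum>k\<in>UNIV. \<Sum>e\<in>UNIV. \<Sum>j\<in>UNIV. \<Sum>l\<in>UNIV. bt x c j * bt x d k * bt x b l * (?C k e * christoffel G e j l x))"
        unfolding E7_def by (simp add: sum_distrib_left mult_ac)
      also have "\<dots> = (\<Sum>k\<in>UNIV. \<Sum>j\<in>UNIV. \<Sum>l\<in>UNIV. \<Sum>e\<in>UNIV. bt x c j * bt x d k * bt x b l * (?C k e * christoffel G e j l x))"
        by (intro sum.cong refl sum_move_in2)
      also have "\<dots> = R4" unfolding R4_def by (rule sum.swap)
      finally show ?thesis by simp
    qed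
    show ?thesis unfolding split r2 r3 r4 ..
  qed
  show ?thesis unfolding R W_E QV using e2 e46[of c d] e46[of d c] by linarith
qed

end


lemma sm2: "(\<Sum>p\<in>(UNIV::'a::finite set). \<Sum>k\<in>(UNIV::'b::finite set). \<Sum>l\<in>(UNIV::'c::finite set). f p k l :: real)
   = (\<Sum>k\<in>UNIV. \<Sum>l\<in>UNIV. \<Sum>p\<in>UNIV. f p k l)"
proof -
  have "(\<Sum>p\<in>UNIV. \<Sum>k\<in>UNIV. \<Sum>l\<in>UNIV. f p k l) = (\<Sum>k\<in>UNIV. \<Sum>p\<in>UNIV. \<Sum>l\<in>UNIV. f p k l)"
    by (rule sum.swap)
  also have "\<dots> = (\<Sum>k\<in>UNIV. \<Sum>l\<in>UNIV. \<Sum>p\<in>UNIV. f p k l)"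
    by (intro sum.cong refl sum.swap)
  finally show ?thesis .
qed

lemma sm3: "(\<Sum>p\<in>(UNIV::'a::finite set). \<Sum>k\<in>(UNIV::'b::finite set). \<Sum>l\<in>(UNIV::'c::finite set). \<Sum>s\<in>(UNIV::'d::finite set). f p k l s :: real)
   = (\<Sum>k\<in>UNIV. \<Sum>l\<in>UNIV. \<Sum>s\<in>UNIV. \<Sum>p\<in>UNIV. f p k l s)"
proof -
  have "(\<Sum>p\<in>UNIV. \<Sum>k\<in>UNIV. \<Sum>l\<in>UNIV. \<Sum>s\<in>UNIV. f p k l s) = (\<Sum>k\<in>UNIV. \<Sum>l\<in>UNIV. \<Sum>p\<in>UNIV. \<Sum>s\<in>UNIV. f p k l s)"
    by (rule sm2)
  also have "\<dots> = (\<Sum>k\<in>UNIV. \<Sum>l\<in>UNIV. \<Sum>s\<in>UNIV. \<Sum>p\<in>UNIV. f p k l s)"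
    by (intro sum.cong refl sum.swap)
  finally show ?thesis .
qed

lemma sum_2x2: "(\<Sum>a\<in>(UNIV::'a::finite set). \<Sum>b\<in>(UNIV::'b::finite set). \<Sum>i\<in>(UNIV::'c::finite set). \<Sum>j\<in>(UNIV::'d::finite set). h a b i j :: real)
  = (\<Sum>i\<in>UNIV. \<Sum>j\<in>UNIV. \<Sum>a\<in>UNIV. \<Sum>b\<in>UNIV. h a b i j)"
proof -
  have "(\<Sum>a\<in>UNIV. \<Sum>b\<in>UNIV. \<Sum>i\<in>UNIV. \<Sum>j\<in>UNIV. h a b i j) = (\<Sum>a\<in>UNIV. \<Sum>i\<in>UNIV. \<Sum>j\<in>UNIV. \<Sum>b\<in>UNIV. h a b i j)"
    by (intro sum.cong refl sm2)
  also have "\<dots> = (\<Sum>i\<in>UNIV. \<Sum>j\<in>UNIV. \<Sum>a\<in>UNIV. \<Sum>b\<in>UNIV. h a b i j)"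
    by (rule sm2)
  finally show ?thesis .
qed

lemma sum_3x3: "(\<Sum>a\<in>(UNIV::'a::finite set). \<Sum>b\<in>(UNIV::'a set). \<Sum>c\<in>(UNIV::'a set).
     \<Sum>i\<in>(UNIV::'b::finite set). \<Sum>j\<in>(UNIV::'b set). \<Sum>k\<in>(UNIV::'b set). h a b c i j k :: real)
  = (\<Sum>i\<in>UNIV. \<Sum>j\<in>UNIV. \<Sum>k\<in>UNIV. \<Sum>a\<in>UNIV. \<Sum>b\<in>UNIV. \<Sum>c\<in>UNIV. h a b c i j k)"
proof -
  have "(\<Sum>a\<in>UNIV. \<Sum>b\<in>UNIV. \<Sum>c\<in>UNIV. \<Sum>i\<in>UNIV. \<Sum>j\<in>UNIV. \<Sum>k\<in>UNIV. h a b c i j k)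
      = (\<Sum>a\<in>UNIV. \<Sum>b\<in>UNIV. \<Sum>i\<in>UNIV. \<Sum>j\<in>UNIV. \<Sum>k\<in>UNIV. \<Sum>c\<in>UNIV. h a b c i j k)"
    by (intro sum.cong refl sm3)
  also have "\<dots> = (\<Sum>a\<in>UNIV. \<Sum>i\<in>UNIV. \<Sum>j\<in>UNIV. \<Sum>k\<in>UNIV. \<Sum>b\<in>UNIV. \<Sum>c\<in>UNIV. h a b c i j k)"
    by (intro sum.cong refl sm3)
  also have "\<dots> = (\<Sum>i\<in>UNIV. \<Sum>j\<in>UNIV. \<Sum>k\<in>UNIV. \<Sum>a\<in>UNIV. \<Sum>b\<in>UNIV. \<Sum>c\<in>UNIV. h a b c i j k)"
    by (rule sm3)
  finally show ?thesis .
qed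

lemma TL:
  fixes f :: "'a::finite \<Rightarrow> 'a \<Rightarrow> 'a \<Rightarrow> real" and X Y Z :: "'a \<Rightarrow> 'b::finite \<Rightarrow> real"
  shows "(\<Sum>a\<in>UNIV. \<Sum>b\<in>UNIV. \<Sum>c\<in>UNIV. f a b c * (\<Sum>i\<in>UNIV. \<Sum>j\<in>UNIV. \<Sum>k\<in>UNIV. X a i * Y b j * Z c k * g i j k))
    = (\<Sum>i\<in>UNIV. \<Sum>j\<in>UNIV. \<Sum>k\<in>UNIV. g i j k * (\<Sum>a\<in>UNIV. \<Sum>b\<in>UNIV. \<Sum>c\<in>UNIV. f a b c * X a i * Y b j * Z c k))"
proof -
  have "(\<Sum>a\<in>UNIV. \<Sum>b\<in>UNIV. \<Sum>c\<in>UNIV. f a b c * (\<Sum>i\<in>UNIV. \<Sum>j\<in>UNIV. \<Sum>k\<in>UNIV. X a i * Y b j * Z c k * g i j k))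
    = (\<Sum>a\<in>UNIV. \<Sum>b\<in>UNIV. \<Sum>c\<in>UNIV. \<Sum>i\<in>UNIV. \<Sum>j\<in>UNIV. \<Sum>k\<in>UNIV. f a b c * X a i * Y b j * Z c k * g i j k)"
    by (simp add: sum_distrib_left mult_ac)
  also have "\<dots> = (\<Sum>i\<in>UNIV. \<Sum>j\<in>UNIV. \<Sum>k\<in>UNIV. \<Sum>a\<in>UNIV. \<Sum>b\<in>UNIV. \<Sum>c\<in>UNIV. f a b c * X a i * Y b j * Z c k * g i j k)"
    by (rule sum_3x3)
  also have "\<dots> = (\<Sum>i\<in>UNIV. \<Sum>j\<in>UNIV. \<Sum>k\<in>UNIV. g i j k * (\<Sum>a\<in>UNIV. \<Sum>b\<in>UNIV. \<Sum>c\<in>UNIV. f a b c * X a i * Y b j * Z c k))"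
    by (simp add: sum_distrib_left mult_ac)
  finally show ?thesis .
qed

lemma prod3: "(\<Sum>a\<in>UNIV. \<Sum>b\<in>UNIV. \<Sum>c\<in>UNIV. (p a * q b * r c :: real)) = (\<Sum>a\<in>UNIV. p a) * (\<Sum>b\<in>UNIV. q b) * (\<Sum>c\<in>UNIV. r c)"
proof -
  have "(\<Sum>a\<in>UNIV. \<Sum>b\<in>UNIV. \<Sum>c\<in>UNIV. (p a * q b * r c :: real)) = (\<Sum>a\<in>UNIV. p a * (\<Sum>b\<in>UNIV. q b * (\<Sum>c\<in>UNIV. r c)))"
    by (simp add: sum_distrib_left mult.assoc)
  also have "\<dots> = (\<Sum>a\<in>UNIV. p a) * ((\<Sum>b\<in>UNIV. q b) * (\<Sum>c\<in>UNIV. r c))"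
    by (simp only: sum_distrib_right[symmetric])
  finally show ?thesis by (simp add: mult.assoc)
qed

lemma contract3:
  fixes P M Nm :: "'n::finite \<Rightarrow> 'n \<Rightarrow> real" and S T TL :: "'n \<Rightarrow> 'n \<Rightarrow> 'n \<Rightarrow> real"
  assumes T: "\<And>a b c. T a b c = (\<Sum>i\<in>UNIV. \<Sum>j\<in>UNIV. \<Sum>k\<in>UNIV. P a i * P b j * P c k * S i j k)"
    and L: "\<And>a b c. TL a b c = (\<Sum>a'\<in>UNIV. \<Sum>b'\<in>UNIV. \<Sum>c'\<in>UNIV. M a a' * M b b' * M c c' * T a' b' c')"
    and N: "\<And>i i'. (\<Sum>a\<in>UNIV. \<Sum>a'\<in>UNIV. P a i * M a a' * P a' i') = Nm i i'"
  shows "(\<Sum>a\<in>UNIV. \<Sum>b\<in>UNIV. \<Sum>c\<in>UNIV. T a b c * TL a b c)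
    = (\<Sum>i\<in>UNIV. \<Sum>j\<in>UNIV. \<Sum>k\<in>UNIV. S i j k * (\<Sum>i'\<in>UNIV. \<Sum>j'\<in>UNIV. \<Sum>k'\<in>UNIV. Nm i i' * Nm j j' * Nm k k' * S i' j' k'))"
proof -
  define K where "K a' i = (\<Sum>a\<in>UNIV. P a i * M a a')" for a' i
  have inner: "(\<Sum>a\<in>UNIV. \<Sum>b\<in>UNIV. \<Sum>c\<in>UNIV. TL a b c * P a i * P b j * P c k)
     = (\<Sum>i'\<in>UNIV. \<Sum>j'\<in>UNIV. \<Sum>k'\<in>UNIV. Nm i i' * Nm j j' * Nm k k' * S i' j' k')" for i j k
  proof -
    have "(\<Sum>a\<in>UNIV. \<Sum>b\<in>UNIV. \<Sum>c\<in>UNIV. TL a b c * P a i * P b j * P c k)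
      = (\<Sum>a\<in>UNIV. \<Sum>b\<in>UNIV. \<Sum>c\<in>UNIV. (P a i * P b j * P c k) * (\<Sum>a'\<in>UNIV. \<Sum>b'\<in>UNIV. \<Sum>c'\<in>UNIV. M a a' * M b b' * M c c' * T a' b' c'))"
      by (simp add: L mult_ac)
    also have "\<dots> = (\<Sum>a'\<in>UNIV. \<Sum>b'\<in>UNIV. \<Sum>c'\<in>UNIV. T a' b' c' * (\<Sum>a\<in>UNIV. \<Sum>b\<in>UNIV. \<Sum>c\<in>UNIV. (P a i * P b j * P c k) * M a a' * M b b' * M c c'))"
      by (rule TL)
    also have "\<dots> = (\<Sum>a'\<in>UNIV. \<Sum>b'\<in>UNIV. \<Sum>c'\<in>UNIV. (K a' i * K b' j * K c' k) * T a' b' c')"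
    proof (intro sum.cong refl)
      fix a' b' c'
      have "(\<Sum>a\<in>UNIV. \<Sum>b\<in>UNIV. \<Sum>c\<in>UNIV. (P a i * P b j * P c k) * M a a' * M b b' * M c c')
        = (\<Sum>a\<in>UNIV. \<Sum>b\<in>UNIV. \<Sum>c\<in>UNIV. (P a i * M a a') * (P b j * M b b') * (P c k * M c c'))"
        by (simp add: mult_ac)
      also have "\<dots> = K a' i * K b' j * K c' k" unfolding K_def by (rule prod3)
      finally show "T a' b' c' * (\<Sum>a\<in>UNIV. \<Sum>b\<in>UNIV. \<Sum>c\<in>UNIV. (P a i * P b j * P c k) * M a a' * M b b' * M c c')
          = (K a' i * K b' j * K c' k) * T a' b' c'" by simp
    qed
    also have "\<dots> = (\<Sum>a'\<in>UNIV. \<Sum>b'\<in>UNIV. \<Sum>c'\<in>UNIV. (K a' i * K b' j * K c' k) *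
        (\<Sum>i'\<in>UNIV. \<Sum>j'\<in>UNIV. \<Sum>k'\<in>UNIV. P a' i' * P b' j' * P c' k' * S i' j' k'))"
      by (simp only: T)
    also have "\<dots> = (\<Sum>i'\<in>UNIV. \<Sum>j'\<in>UNIV. \<Sum>k'\<in>UNIV. S i' j' k' * (\<Sum>a'\<in>UNIV. \<Sum>b'\<in>UNIV. \<Sum>c'\<in>UNIV. (K a' i * K b' j * K c' k) * P a' i' * P b' j' * P c' k'))"
      by (rule TL)
    also have "\<dots> = (\<Sum>i'\<in>UNIV. \<Sum>j'\<in>UNIV. \<Sum>k'\<in>UNIV. Nm i i' * Nm j j' * Nm k k' * S i' j' k')"
    proof (intro sum.cong refl)
      fix i' j' k'
      have NK: "(\<Sum>a'\<in>UNIV. K a' i * P a' i') = Nm i i'" for i i'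
        unfolding K_def N[symmetric] by (simp add: sum_distrib_right) (rule sum.swap)
      have "(\<Sum>a'\<in>UNIV. \<Sum>b'\<in>UNIV. \<Sum>c'\<in>UNIV. (K a' i * K b' j * K c' k) * P a' i' * P b' j' * P c' k')
        = (\<Sum>a'\<in>UNIV. \<Sum>b'\<in>UNIV. \<Sum>c'\<in>UNIV. (K a' i * P a' i') * (K b' j * P b' j') * (K c' k * P c' k'))"
        by (simp add: mult_ac)
      also have "\<dots> = Nm i i' * Nm j j' * Nm k k'" unfolding prod3 NK ..
      finally show "S i' j' k' * (\<Sum>a'\<in>UNIV. \<Sum>b'\<in>UNIV. \<Sum>c'\<in>UNIV. (K a' i * K b' j * K c' k) * P a' i' * P b' j' * P c' k')
         = Nm i i' * Nm j j' * Nm k k' * S i' j' k'" by simp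
    qed
    finally show ?thesis .
  qed
  have "(\<Sum>a\<in>UNIV. \<Sum>b\<in>UNIV. \<Sum>c\<in>UNIV. T a b c * TL a b c)
     = (\<Sum>a\<in>UNIV. \<Sum>b\<in>UNIV. \<Sum>c\<in>UNIV. TL a b c * (\<Sum>i\<in>UNIV. \<Sum>j\<in>UNIV. \<Sum>k\<in>UNIV. P a i * P b j * P c k * S i j k))"
    by (simp add: T mult.commute)
  also have "\<dots> = (\<Sum>i\<in>UNIV. \<Sum>j\<in>UNIV. \<Sum>k\<in>UNIV. S i j k * (\<Sum>a\<in>UNIV. \<Sum>b\<in>UNIV. \<Sum>c\<in>UNIV. TL a b c * P a i * P b j * P c k))"
    by (rule TL)
  also have "\<dots> = (\<Sum>i\<in>UNIV. \<Sum>j\<in>UNIV. \<Sum>k\<in>UNIV. S i j k * (\<Sum>i'\<in>UNIV. \<Sum>j'\<in>UNIV. \<Sum>k'\<in>UNIV. Nm i i' * Nm j j' * Nm k k' * S i' j' k'))"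
    by (simp only: inner)
  finally show ?thesis .
qed


context ctx begin

lemma N_mat: assumes y: "y \<in> U"
  shows "transpose (beta B y) ** ghat_low G B y ** beta B y = Ginv G y"
proof -
  have Bb: "B y ** beta B y = mat 1" unfolding beta_def using inv_mats[OF B_inv[OF y]] by simp
  have tt: "transpose (beta B y) ** transpose (B y) = mat 1"
    using Bb by (metis matrix_transpose_mul transpose_mat)
  have "transpose (beta B y) ** ghat_low G B y ** beta B y
      = (transpose (beta B y) ** transpose (B y)) ** Ginv G y ** (B y ** beta B y)"
    unfolding gl_mat[OF y] by (simp add: matrix_mul_assoc)
  then show ?thesis unfolding tt Bb by simp
qed

lemma N_entry: assumes y: "y \<in> U"
  shows "(\<Sum>a\<in>UNIV. \<Sum>b\<in>UNIV. bt y a l * ghat_low G B y $ a $ b * bt y b k) = gi y l k"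
proof -
  have "gi y l k = (transpose (beta B y) ** ghat_low G B y ** beta B y) $ l $ k" unfolding N_mat[OF y] ..
  also have "\<dots> = (\<Sum>b\<in>UNIV. \<Sum>a\<in>UNIV. bt y a l * ghat_low G B y $ a $ b * bt y b k)"
    by (simp add: mat_entry transpose_def sum_distrib_right)
  also have "\<dots> = (\<Sum>a\<in>UNIV. \<Sum>b\<in>UNIV. bt y a l * ghat_low G B y $ a $ b * bt y b k)" by (rule sum.swap)
  finally show ?thesis by simp
qed

lemma R4_full: assumes x: "x \<in> U"
  shows "R_hat4 G B a b c d x = (\<Sum>p\<in>UNIV. BB x p a *
    (\<Sum>j\<in>UNIV. \<Sum>k\<in>UNIV. \<Sum>l\<in>UNIV. bt x c j * bt x d k * bt x b l * riemann G p l j k x))"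
  unfolding R4_form[OF x] C2[OF x] ..

lemma R2_full: assumes x: "x \<in> U"
  shows "R_hat2 G B a b x = (\<Sum>k\<in>UNIV. \<Sum>l\<in>UNIV. bt x a l * bt x b k * ricci G l k x)"
proof -
  have "R_hat2 G B a b x = (\<Sum>m\<in>UNIV. \<Sum>p\<in>UNIV. \<Sum>j\<in>UNIV. \<Sum>k\<in>UNIV. \<Sum>l\<in>UNIV.
        (BB x p m * bt x m j) * (bt x b k * bt x a l * riemann G p l j k x))"
    unfolding R_hat2_def R4_full[OF x] by (simp add: sum_distrib_left mult_ac)
  also have "\<dots> = (\<Sum>p\<in>UNIV. \<Sum>j\<in>UNIV. \<Sum>k\<in>UNIV. \<Sum>l\<in>UNIV. \<Sum>m\<in>UNIV.
        (BB x p m * bt x m j) * (bt x b k * bt x a l * riemann G p l j k x))"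
    by (rule sum_move_in3[where 'a='n and 'b='n and 'c='n and 'd='n, where f="\<lambda>m p j k. \<Sum>l\<in>UNIV. (BB x p m * bt x m j) * (bt x b k * bt x a l * riemann G p l j k x)", THEN trans])
       (intro sum.cong refl sum.swap)
  also have "\<dots> = (\<Sum>p\<in>UNIV. \<Sum>j\<in>UNIV. \<Sum>k\<in>UNIV. \<Sum>l\<in>UNIV. (if p = j then 1 else 0) * (bt x b k * bt x a l * riemann G p l j k x))"
    by (simp add: sum_distrib_right[symmetric] Bb[OF x])
  also have "\<dots> = (\<Sum>p\<in>UNIV. \<Sum>j\<in>UNIV. (if p = j then 1 else 0) * (\<Sum>k\<in>UNIV. \<Sum>l\<in>UNIV. bt x b k * bt x a l * riemann G p l j k x))"
    by (simp only: sum_distrib_left)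
  also have "\<dots> = (\<Sum>p\<in>UNIV. \<Sum>k\<in>UNIV. \<Sum>l\<in>UNIV. bt x b k * bt x a l * riemann G p l p k x)"
    by (simp only: sum_delta_l)
  also have "\<dots> = (\<Sum>k\<in>UNIV. \<Sum>l\<in>UNIV. \<Sum>p\<in>UNIV. bt x b k * bt x a l * riemann G p l p k x)"
    by (rule sum_move_in2)
  also have "\<dots> = (\<Sum>k\<in>UNIV. \<Sum>l\<in>UNIV. bt x a l * bt x b k * ricci G l k x)"
    unfolding ricci_def by (simp add: sum_distrib_left mult_ac)
  finally show ?thesis .
qed

lemma Rhat_eq: assumes x: "x \<in> U" shows "R_hat G B x = scalar_curv G x"
proof -
  have "R_hat G B x = (\<Sum>a\<in>UNIV. \<Sum>b\<in>UNIV. \<Sum>k\<in>UNIV. \<Sum>l\<in>UNIV. (bt x a l * ghat_low G B x $ a $ b * bt x b k) * ricci G l k x)"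
    unfolding R_hat_def R2_full[OF x] by (simp add: sum_distrib_left mult_ac)
  also have "\<dots> = (\<Sum>k\<in>UNIV. \<Sum>l\<in>UNIV. \<Sum>a\<in>UNIV. \<Sum>b\<in>UNIV. (bt x a l * ghat_low G B x $ a $ b * bt x b k) * ricci G l k x)"
    by (rule sum_2x2)
  also have "\<dots> = (\<Sum>k\<in>UNIV. \<Sum>l\<in>UNIV. gi x l k * ricci G l k x)"
    by (simp add: sum_distrib_right[symmetric] N_entry[OF x])
  also have "\<dots> = (\<Sum>l\<in>UNIV. \<Sum>k\<in>UNIV. gi x l k * ricci G l k x)" by (rule sum.swap)
  finally show ?thesis by (simp add: scalar_curv_def)
qed

lemma dil_eq: assumes x: "x \<in> U"
  shows "(\<Sum>a\<in>UNIV. \<Sum>b\<in>UNIV. ghat_low G B x $ a $ b * Dop B a phi x * Dop B b phi x)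
    = (\<Sum>a\<in>UNIV. \<Sum>b\<in>UNIV. gi x a b * pd a phi x * pd b phi x)"
proof -
  have "(\<Sum>a\<in>UNIV. \<Sum>b\<in>UNIV. ghat_low G B x $ a $ b * Dop B a phi x * Dop B b phi x)
     = (\<Sum>a\<in>UNIV. \<Sum>b\<in>UNIV. \<Sum>i\<in>UNIV. \<Sum>j\<in>UNIV. (bt x a i * ghat_low G B x $ a $ b * bt x b j) * (pd i phi x * pd j phi x))"
    unfolding Dop_def by (simp add: sum_distrib_left sum_distrib_right mult_ac)
  also have "\<dots> = (\<Sum>i\<in>UNIV. \<Sum>j\<in>UNIV. \<Sum>a\<in>UNIV. \<Sum>b\<in>UNIV. (bt x a i * ghat_low G B x $ a $ b * bt x b j) * (pd i phi x * pd j phi x))"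
    by (rule sum_2x2)
  also have "\<dots> = (\<Sum>i\<in>UNIV. \<Sum>j\<in>UNIV. gi x i j * (pd i phi x * pd j phi x))"
    by (simp add: sum_distrib_right[symmetric] N_entry[OF x])
  finally show ?thesis by (simp add: mult_ac)
qed

lemma T1: assumes y: "y \<in> U"
  shows "(\<Sum>m\<in>UNIV. bt y a m * dbt m b c y) = (\<Sum>i\<in>UNIV. \<Sum>j\<in>UNIV. \<Sum>k\<in>UNIV. bt y a i * bt y b j * bt y c k * dB i j k y)"
proof -
  have "(\<Sum>m\<in>UNIV. bt y a m * dbt m b c y) = (\<Sum>m\<in>UNIV. \<Sum>p\<in>UNIV. \<Sum>q\<in>UNIV. bt y a m * (bt y b p * dB m p q y * (- bt y q c)))"
    unfolding db[OF y] by (simp add: sum_distrib_left sum_negf)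
  also have "\<dots> = (\<Sum>i\<in>UNIV. \<Sum>j\<in>UNIV. \<Sum>k\<in>UNIV. bt y a i * bt y b j * bt y c k * dB i j k y)"
    by (intro sum.cong refl) (simp add: b_anti[OF y, of _ c] mult_ac)
  finally show ?thesis .
qed

lemma Theta_H: assumes y: "y \<in> U"
  shows "Theta_up B a b c y = (\<Sum>i\<in>UNIV. \<Sum>j\<in>UNIV. \<Sum>k\<in>UNIV. bt y a i * bt y b j * bt y c k * Hlow B i j k y)"
proof -
  have t: "Theta_up B a b c y = (\<Sum>m\<in>UNIV. bt y a m * dbt m b c y) + (\<Sum>m\<in>UNIV. bt y b m * dbt m c a y) + (\<Sum>m\<in>UNIV. bt y c m * dbt m a b y)"
    unfolding Theta_up_def by (simp add: sum.distrib)
  have t2: "(\<Sum>m\<in>UNIV. bt y b m * dbt m c a y) = (\<Sum>i\<in>UNIV. \<Sum>j\<in>UNIV. \<Sum>k\<in>UNIV. bt y a i * bt y b j * bt y c k * dB j k i y)"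
  proof -
    have "(\<Sum>m\<in>UNIV. bt y b m * dbt m c a y) = (\<Sum>i\<in>UNIV. \<Sum>j\<in>UNIV. \<Sum>k\<in>UNIV. bt y b i * bt y c j * bt y a k * dB i j k y)"
      by (rule T1[OF y])
    also have "\<dots> = (\<Sum>k\<in>UNIV. \<Sum>i\<in>UNIV. \<Sum>j\<in>UNIV. bt y b i * bt y c j * bt y a k * dB i j k y)"
      by (rule sm2[symmetric])
    finally show ?thesis by (simp add: mult_ac)
  qed
  have t3: "(\<Sum>m\<in>UNIV. bt y c m * dbt m a b y) = (\<Sum>i\<in>UNIV. \<Sum>j\<in>UNIV. \<Sum>k\<in>UNIV. bt y a i * bt y b j * bt y c k * dB k i j y)"
  proof -
    have "(\<Sum>m\<in>UNIV. bt y c m * dbt m a b y) = (\<Sum>i\<in>UNIV. \<Sum>j\<in>UNIV. \<Sum>k\<in>UNIV. bt y c i * bt y a j * bt y b k * dB i j k y)"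
      by (rule T1[OF y])
    also have "\<dots> = (\<Sum>j\<in>UNIV. \<Sum>k\<in>UNIV. \<Sum>i\<in>UNIV. bt y c i * bt y a j * bt y b k * dB i j k y)"
      by (rule sm2)
    finally show ?thesis by (simp add: mult_ac)
  qed
  show ?thesis unfolding t t2 t3 unfolding T1[OF y] Hlow_def by (simp add: distrib_left sum.distrib)
qed

lemma Theta_sq_eq: assumes x: "x \<in> U" shows "Theta_sq G B x = Hsq G B x"
  unfolding Theta_sq_def Hsq_def Hup_def
  by (rule contract3[where P = "\<lambda>a i. bt x a i" and M = "\<lambda>a b. ghat_low G B x $ a $ b" and S = "\<lambda>i j k. Hlow B i j k x",
       OF Theta_H[OF x] Theta_low_def N_entry[OF x]])

end


lemma skew_quad:
  fixes A :: "real^'n::finite^'n"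
  assumes sk: "\<And>a b. A $ a $ b = - A $ b $ a"
  shows "(\<Sum>i\<in>UNIV. \<Sum>j\<in>UNIV. v $ i * A $ i $ j * v $ j) = 0"
proof -
  let ?Q = "(\<Sum>i\<in>UNIV. \<Sum>j\<in>UNIV. v $ i * A $ i $ j * v $ j)"
  have "?Q = (\<Sum>j\<in>UNIV. \<Sum>i\<in>UNIV. v $ i * A $ i $ j * v $ j)" by (rule sum.swap)
  also have "\<dots> = (\<Sum>j\<in>UNIV. \<Sum>i\<in>UNIV. - (v $ j * A $ j $ i * v $ i))"
  proof (intro sum.cong refl)
    fix j i show "v $ i * A $ i $ j * v $ j = - (v $ j * A $ j $ i * v $ i)"
      using sk[of j i] by simp
  qed
  also have "\<dots> = - ?Q" by (simp add: sum_negf)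
  finally show ?thesis by simp
qed

lemma skew_det_pos:
  fixes A :: "real^'n::finite^'n"
  assumes sk: "\<And>a b. A $ a $ b = - A $ b $ a" and inv: "invertible A"
  shows "det A > 0"
proof -
  define M where "M s = ((\<chi> i j. (1 - s) * (if i = j then 1 else 0) + s * A $ i $ j) :: real^'n^'n)" for s :: real
  define r where "r s = det (M s)" for s
  have cont: "continuous_on {0..1} r"
    unfolding r_def M_def by (rule det_continuous) (simp only: vec_lambda_beta, intro continuous_intros)
  have r0: "r 0 = 1" unfolding r_def M_def by (simp add: mat_def[symmetric])
  have M1: "M 1 = A" unfolding M_def by (simp add: vec_eq_iff)
  have dA: "det A \<noteq> 0" using inv invertible_det_nz by blast
  have nz: "r s \<noteq> 0" if s: "0 \<le> s" "s < 1" for s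
  proof -
    have "\<forall>v. M s *v v = 0 \<longrightarrow> v = 0"
    proof (intro allI impI)
      fix v assume Mv: "M s *v v = 0"
      have Mi: "(M s *v v) $ i = (1 - s) * v $ i + s * (\<Sum>j\<in>UNIV. A $ i $ j * v $ j)" for i
      proof -
        have "(M s *v v) $ i = (\<Sum>j\<in>UNIV. (if i = j then (1 - s) * v $ j else 0) + s * (A $ i $ j * v $ j))"
          unfolding M_def matrix_vector_mult_def vec_lambda_beta by (intro sum.cong refl) (simp add: algebra_simps)
        also have "\<dots> = (1 - s) * v $ i + s * (\<Sum>j\<in>UNIV. A $ i $ j * v $ j)"
          by (simp add: sum.distrib sum_distrib_left)
        finally show ?thesis .
      qed
      have "(\<Sum>i\<in>UNIV. v $ i * (M s *v v) $ i) = (1 - s) * (\<Sum>i\<in>UNIV. v $ i * v $ i) + s * (\<Sum>i\<in>UNIV. \<Sum>j\<in>UNIV. v $ i * A $ i $ j * v $ j)"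
        unfolding Mi by (simp add: distrib_left sum.distrib sum_distrib_left mult_ac)
      then have "(1 - s) * (\<Sum>i\<in>UNIV. v $ i * v $ i) = 0" using Mv skew_quad[OF sk, of v] by simp
      then have "(\<Sum>i\<in>UNIV. v $ i * v $ i) = 0" using s by simp
      then have "\<forall>i\<in>UNIV. v $ i * v $ i = 0" by (subst (asm) sum_nonneg_eq_0_iff) auto
      then show "v = 0" by (simp add: vec_eq_iff)
    qed
    then have "inj ((*v) (M s))" by (simp add: linear_injective_0 matrix_vector_mul_linear)
    then show ?thesis unfolding r_def
      using det_nz_iff_inj[OF matrix_vector_mul_linear[of "M s"]] by (simp add: matrix_of_matrix_vector_mul)
  qed
  show ?thesis
  proof (rule ccontr)
    assume "\<not> det A > 0"
    then have "r 1 \<le> 0" unfolding r_def M1 by simp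
    then obtain s where s: "0 \<le> s" "s \<le> 1" "r s = 0"
      using IVT2'[of r 1 0 0] cont r0 by auto
    show False
    proof (cases "s = 1")
      case True then show False using s dA M1 unfolding r_def by simp
    next
      case False then show False using nz[of s] s by simp
    qed
  qed
qed

lemma lorentzian_inv:
  fixes A :: "real^'n::finite^'n"
  assumes "lorentzian A" shows "invertible A" "\<And>a b. A $ a $ b = A $ b $ a"
proof -
  have T: "transpose A = A" and ex: "\<exists>(P::real^'n^'n) i0. invertible P \<and>
        transpose P ** A ** P = (\<chi> i j. if i = j then (if i = i0 then -1 else 1) else 0)"
    using assms unfolding lorentzian_def by auto
  obtain P :: "real^'n^'n" and i0 where P: "invertible P"
    "transpose P ** A ** P = (\<chi> i j. if i = j then (if i = i0 then -1 else 1) else 0)"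
    using ex by blast
  let ?D = "(\<chi> i j. if i = j then (if i = i0 then -1 else 1) else 0) :: real^'n^'n"
  have "det ?D = (\<Prod>i\<in>UNIV. if i = i0 then -1 else 1)" by (subst det_diagonal) auto
  also have "\<dots> = -1" by (simp add: prod.If_cases Int_absorb1)
  finally have dD: "det ?D = -1" .
  have "det (transpose P ** A ** P) = det P * det A * det P" by (simp add: det_mul)
  then have "det P * det A * det P = -1" using dD unfolding P(2) by simp
  then have "det A \<noteq> 0" by auto
  then show "invertible A" using invertible_det_nz by blast
  show "A $ a $ b = A $ b $ a" for a b using T by (metis transpose_def vec_lambda_beta)
qed

lemma smooth_d: assumes "smooth_on U f" "open U" "y \<in> U" shows "f differentiable at y"
proof -
  have "pdk [] f differentiable_on U" using assms(1) unfolding smooth_on_def by blast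
  then have "f differentiable_on U" by (simp add: pdk_def)
  then show ?thesis using differentiable_on_eq_differentiable_at[OF assms(2)] assms(3) by blast
qed

lemma smooth_dd: assumes "smooth_on U f" "open U" "y \<in> U" shows "pd k f differentiable at y"
proof -
  have "pdk [k] f differentiable_on U" using assms(1) unfolding smooth_on_def by blast
  then have "pd k f differentiable_on U" by (simp add: pdk_def)
  then show ?thesis using differentiable_on_eq_differentiable_at[OF assms(2)] assms(3) by blast
qed

context ctx begin

lemma prefactor: assumes x: "x \<in> U" and dB: "det (B x) > 0"
  shows "sqrt (- det (ghat_up G B x)) * det (matrix_inv (beta B x)) = sqrt (- det (G x))"
proof -
  have bB: "beta B x ** B x = mat 1" and Bb: "B x ** beta B x = mat 1"
    unfolding beta_def using inv_mats[OF B_inv[OF x]] by simp_all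
  have ib: "invertible (beta B x)" using bB invertible_right_inverse by blast
  have mi: "matrix_inv (beta B x) = B x" by (rule inv_unique_right[OF ib bB])
  have "det (B x ** beta B x) = 1" using Bb by simp
  then have d1: "det (B x) * det (beta B x) = 1" by (simp add: det_mul)
  have "det (ghat_up G B x) = det (beta B x) ^ 2 * det (G x)"
    unfolding gu_mat by (simp add: det_mul power2_eq_square)
  then have "- det (ghat_up G B x) = det (beta B x) ^ 2 * (- det (G x))" by simp
  then have sq: "sqrt (- det (ghat_up G B x)) = \<bar>det (beta B x)\<bar> * sqrt (- det (G x))"
    by (simp only: real_sqrt_mult real_sqrt_abs)
  have one: "\<bar>det (beta B x)\<bar> * det (B x) = 1"
  proof -
    have "det (beta B x) = 1 / det (B x)" using d1 dB by (simp add: field_simps)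
    then have "det (beta B x) > 0" using dB by simp
    then show ?thesis using d1 by (simp add: mult.commute)
  qed
  have "sqrt (- det (ghat_up G B x)) * det (B x) = sqrt (- det (G x)) * (\<bar>det (beta B x)\<bar> * det (B x))"
    unfolding sq by (simp only: mult_ac)
  then show ?thesis unfolding mi one by simp
qed

end

theorem mainTheorem5:
  fixes U :: "(real^'n::finite) set"
    and G B :: "real^'n \<Rightarrow> real^'n^'n"
    and phi :: "real^'n \<Rightarrow> real"
    and x :: "real^'n"
  assumes "even CARD('n)"
    and "open U"
    and "\<forall>y\<in>U. lorentzian (G y)"
    and "\<forall>a b. smooth_on U (\<lambda>y. G y $ a $ b)"
    and "\<forall>y\<in>U. \<forall>a b. B y $ a $ b = - B y $ b $ a"
    and "\<forall>y\<in>U. invertible (B y)"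
    and "\<forall>a b. smooth_on U (\<lambda>y. B y $ a $ b)"
    and "smooth_on U phi"
    and "x \<in> U"
  shows "sqrt (- det (G x)) * exp (-2 * phi x) *
           (scalar_curv G x - (1/12) * Hsq G B x
            + 4 * (\<Sum>a\<in>UNIV. \<Sum>b\<in>UNIV. Ginv G x $ a $ b * pd a phi x * pd b phi x))
       = sqrt (- det (ghat_up G B x)) * det (matrix_inv (beta B x)) * exp (-2 * phi x) *
           (R_hat G B x - (1/12) * Theta_sq G B x
            + 4 * (\<Sum>a\<in>UNIV. \<Sum>b\<in>UNIV. ghat_low G B x $ a $ b * Dop B a phi x * Dop B b phi x))"
proof -
  interpret ctx U G B
  proof
    show "open U" by fact
    show "invertible (G y)" if "y \<in> U" for y by (rule lorentzian_inv(1)[OF assms(3)[rule_format, OF that]])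
    show "G y $ a $ b = G y $ b $ a" if "y \<in> U" for y a b by (rule lorentzian_inv(2)[OF assms(3)[rule_format, OF that]])
    show "(\<lambda>z. G z $ a $ b) differentiable at y" if "y \<in> U" for y a b by (rule smooth_d[OF assms(4)[rule_format] assms(2) that])
    show "pd k (\<lambda>z. G z $ a $ b) differentiable at y" if "y \<in> U" for y a b k by (rule smooth_dd[OF assms(4)[rule_format] assms(2) that])
    show "invertible (B y)" if "y \<in> U" for y by (rule assms(6)[rule_format, OF that])
    show "B y $ a $ b = - B y $ b $ a" if "y \<in> U" for y a b by (rule assms(5)[rule_format, OF that])
    show "(\<lambda>z. B z $ a $ b) differentiable at y" if "y \<in> U" for y a b by (rule smooth_d[OF assms(7)[rule_format] assms(2) that])
    show "pd k (\<lambda>z. B z $ a $ b) differentiable at y" if "y \<in> U" for y a b k by (rule smooth_dd[OF assms(7)[rule_format] assms(2) that])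
  qed
  have x: "x \<in> U" by fact
  have dBp: "det (B x) > 0" by (rule skew_det_pos[OF assms(5)[rule_format, OF x] assms(6)[rule_format, OF x]])
  show ?thesis
    unfolding Rhat_eq[OF x] Theta_sq_eq[OF x] dil_eq[OF x] prefactor[OF x dBp] ..
qed


end
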